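(* Let $\Omega\subset\mathbb{R}^n$, $n\in\mathbb{N}$, be a bounded smooth domain. Let $\alpha\ge0$, $\kappa\ge0$, $T\in(0,\infty]$, and let the nonnegative functions $u,v\in C^0(\overline\Omega\times[0,T))\cap C^{2,1}(\overline\Omega\times(0,T))$ solve \[ u_t=\Delta u-\nabla\cdot\Big(\frac{u}{(1+u)^\alpha}\nabla v\Big)-uw+\kappa-u,\qquad v_t=\Delta v+uw-v\qquad\text{in }\Omega\times(0,T), \] with $\partial_\nu u=\partial_\nu v=\partial_\nu w=0$ on $\partial\Omega\times(0,T)$, for some function $w$. Then \[ \int_\Omega u(\cdot,t)+\int_\Omega v(\cdot,t)=e^{-t}\Big(\int_\Omega u(\cdot,0)+\int_\Omega v(\cdot,0)\Big)+\kappa|\Omega|(1-e^{-t})\qquad\text{for all }t\in(0,T). \]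
   Context: $\nu$ denotes the outward unit normal on $\partial\Omega$, $\partial_\nu=\nu\cdot\nabla$, and $|\Omega|$ is the Lebesgue measure of $\Omega$. *)

theory Defs
  imports "HOL-Analysis.Analysis"
begin

text \<open>Space variable: x :: real^'n (Euclidean n-space, n = CARD('n) \<ge> 1).
  Time: real.  Functions of (x,t) are curried: u :: real^'n \<Rightarrow> real \<Rightarrow> real.\<close>

fun Ck :: "nat \<Rightarrow> (real^'n \<Rightarrow> real) \<Rightarrow> bool" where
  "Ck 0 f = continuous_on UNIV f"
| "Ck (Suc k) f = (\<exists>f'. (\<forall>x. (f has_derivative f' x) (at x)) \<and>
                          (\<forall>i. Ck k (\<lambda>x. f' x (axis i 1))))"

definition smooth_fun :: "(real^'n \<Rightarrow> real) \<Rightarrow> bool" where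
  "smooth_fun f \<longleftrightarrow> (\<forall>k. Ck k f)"

definition grad :: "(real^'n \<Rightarrow> real) \<Rightarrow> real^'n \<Rightarrow> real^'n" where
  "grad f x = (\<chi> i. frechet_derivative f (at x) (axis i 1))"

definition diverg :: "(real^'n \<Rightarrow> real^'n) \<Rightarrow> real^'n \<Rightarrow> real" where
  "diverg F x = (\<Sum>i\<in>UNIV. frechet_derivative (\<lambda>y. F y $ i) (at x) (axis i 1))"

definition lapl :: "(real^'n \<Rightarrow> real) \<Rightarrow> real^'n \<Rightarrow> real" where
  "lapl f x = diverg (grad f) x"

definition defining_fun :: "(real^'n) set \<Rightarrow> (real^'n \<Rightarrow> real) \<Rightarrow> bool" where
  "defining_fun \<Omega> \<rho> \<longleftrightarrow> smooth_fun \<rho> \<and> \<Omega> = {x. \<rho> x < 0} \<and>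
      (\<forall>x. \<rho> x = 0 \<longrightarrow> grad \<rho> x \<noteq> 0)"

text \<open>Bounded smooth domain: bounded, open, connected, with C^\<infinity> boundary
  (expressed through a global smooth defining function).\<close>
definition bounded_smooth_domain :: "(real^'n) set \<Rightarrow> bool" where
  "bounded_smooth_domain \<Omega> \<longleftrightarrow> \<Omega> \<noteq> {} \<and> open \<Omega> \<and> connected \<Omega> \<and> bounded \<Omega> \<and>
      (\<exists>\<rho>. defining_fun \<Omega> \<rho>)"

text \<open>Outward unit normal at a boundary point (independent of the chosen defining function).\<close>
definition outward_normal :: "(real^'n) set \<Rightarrow> real^'n \<Rightarrow> real^'n" where
  "outward_normal \<Omega> x = (SOME \<nu>. \<exists>\<rho>. defining_fun \<Omega> \<rho> \<and> \<nu> = (1 / norm (grad \<rho> x)) *\<^sub>R grad \<rho> x)"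

definition neumann_zero_at :: "(real^'n) set \<Rightarrow> (real^'n \<Rightarrow> real) \<Rightarrow> real^'n \<Rightarrow> bool" where
  "neumann_zero_at \<Omega> f x \<longleftrightarrow>
     (\<exists>D. (f has_derivative D) (at x within closure \<Omega>) \<and> D (outward_normal \<Omega> x) = 0)"

definition time_open :: "ereal \<Rightarrow> real set" where
  "time_open T = {t. 0 < t \<and> ereal t < T}"

definition time_closed0 :: "ereal \<Rightarrow> real set" where
  "time_closed0 T = {t. 0 \<le> t \<and> ereal t < T}"

definition C0_space :: "(real^'n) set \<Rightarrow> ereal \<Rightarrow> (real^'n \<Rightarrow> real \<Rightarrow> real) \<Rightarrow> bool" where
  "C0_space \<Omega> T u \<longleftrightarrow> continuous_on (closure \<Omega> \<times> time_closed0 T) (\<lambda>(x,t). u x t)"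

definition C21_space :: "(real^'n) set \<Rightarrow> ereal \<Rightarrow> (real^'n \<Rightarrow> real \<Rightarrow> real) \<Rightarrow> bool" where
  "C21_space \<Omega> T u \<longleftrightarrow>
    (\<exists>ut gu hu.
       (\<forall>x\<in>closure \<Omega>. \<forall>t\<in>time_open T.
          ((\<lambda>s. u x s) has_real_derivative ut x t) (at t) \<and>
          ((\<lambda>y. u y t) has_derivative (\<lambda>h. gu x t \<bullet> h)) (at x within closure \<Omega>) \<and>
          ((\<lambda>y. gu y t) has_derivative (\<lambda>h. hu x t *v h)) (at x within closure \<Omega>)) \<and>
       continuous_on (closure \<Omega> \<times> time_open T) (\<lambda>(x,t). ut x t) \<and>
       continuous_on (closure \<Omega> \<times> time_open T) (\<lambda>(x,t). gu x t) \<and>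
       continuous_on (closure \<Omega> \<times> time_open T) (\<lambda>(x,t). hu x t))"

end

theory Submission
  imports Defs
begin
lemma deriv_glue:
  fixes f :: "real \<Rightarrow> real"
  assumes "(f has_real_derivative D) (at x within {..x})"
      and "(f has_real_derivative D) (at x within {x..})"
  shows "(f has_real_derivative D) (at x)"
proof -
  have "((\<lambda>y. (f y - f x) / (y - x)) \<longlongrightarrow> D) (at x within ({..x} \<union> {x..}))"
    using assms by (simp add: Lim_within_Un has_field_derivative_iff)
  moreover have "{..x} \<union> {x..} = (UNIV::real set)" by auto
  ultimately show ?thesis by (simp add: has_field_derivative_iff)
qed

lemma deriv_within_open_at:
  "(f has_real_derivative D) (at x within S) \<Longrightarrow> open S \<Longrightarrow> x \<in> S \<Longrightarrow> (f has_real_derivative D) (at x)"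
  by (metis at_within_open)

definition psi :: "real \<Rightarrow> real" where
  "psi s = (if s \<le> -2 then 1 else if s \<ge> -1 then 0 else 1 - (3*(s+2)^2 - 2*(s+2)^3))"

definition dpsi :: "real \<Rightarrow> real" where
  "dpsi s = (if s \<le> -2 then 0 else if s \<ge> -1 then 0 else -(6*(s+2) - 6*(s+2)^2))"

lemma P1_deriv: "((\<lambda>s::real. 1 - (3*(s+2)^2 - 2*(s+2)^3)) has_real_derivative (-(6*(s+2) - 6*(s+2)^2))) (at s within S)"
  by (auto intro!: derivative_eq_intros simp: algebra_simps power2_eq_square)

lemma psi_deriv: "(psi has_real_derivative dpsi s) (at s)"
proof -
  consider "s < -2" | "s = -2" | "-2 < s \<and> s < -1" | "s = -1" | "s > -1" by linarith
  then show ?thesis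
  proof cases
    case 1
    have "((\<lambda>_. 1::real) has_real_derivative 0) (at s within {..< -2})" by simp
    hence "(psi has_real_derivative 0) (at s within {..< -2})"
      by (rule has_field_derivative_transform_within[where d=1]) (use 1 in \<open>auto simp: psi_def\<close>)
    then have "(psi has_real_derivative dpsi s) (at s within {..< -2})" using 1 by (simp add: dpsi_def)
    then show ?thesis by (rule deriv_within_open_at) (use 1 in auto)
  next
    case 5
    have "((\<lambda>_. 0::real) has_real_derivative 0) (at s within {-1<..})" by simp
    hence "(psi has_real_derivative 0) (at s within {-1<..})"
      by (rule has_field_derivative_transform_within[where d=1]) (use 5 in \<open>auto simp: psi_def\<close>)
    then have "(psi has_real_derivative dpsi s) (at s within {-1<..})" using 5 by (simp add: dpsi_def)
    then show ?thesis by (rule deriv_within_open_at) (use 5 in auto)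
  next
    case 3
    have "(psi has_real_derivative (-(6*(s+2) - 6*(s+2)^2))) (at s within {-2<..<-1})"
      by (rule has_field_derivative_transform_within[OF P1_deriv, where d=1]) (use 3 in \<open>auto simp: psi_def\<close>)
    then have "(psi has_real_derivative dpsi s) (at s within {-2<..<-1})" using 3 by (simp add: dpsi_def)
    then show ?thesis by (rule deriv_within_open_at) (use 3 in auto)
  next
    case 2
    have a: "(psi has_real_derivative 0) (at s within {..s})"
      by (rule has_field_derivative_transform_within[OF DERIV_const[of 1], where d=1]) (use 2 in \<open>auto simp: psi_def\<close>)
    have b: "(psi has_real_derivative (-(6*(s+2) - 6*(s+2)^2))) (at s within {s..})"
      using 2 by (intro has_field_derivative_transform_within[OF P1_deriv[of s "{s..}"], where d="1/2" and g=psi])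
        (auto simp: psi_def dist_real_def)
    show ?thesis using deriv_glue[OF a] b 2 by (simp add: dpsi_def)
  next
    case 4
    have a: "(psi has_real_derivative (-(6*(s+2) - 6*(s+2)^2))) (at s within {..s})"
      using 4 by (intro has_field_derivative_transform_within[OF P1_deriv[of s "{..s}"], where d="1/2" and g=psi])
        (auto simp: psi_def dist_real_def)
    have b: "(psi has_real_derivative 0) (at s within {s..})"
      by (rule has_field_derivative_transform_within[OF DERIV_const[of 0], where d=1]) (use 4 in \<open>auto simp: psi_def\<close>)
    show ?thesis using deriv_glue[OF _ b] a 4 by (simp add: dpsi_def)
  qed
qed

lemma dpsi_cont: "continuous_on UNIV dpsi"
proof -
  have "continuous_on ({..-2} \<union> {-2..-1} \<union> {-1..}) dpsi"
  proof (intro continuous_on_closed_Un)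
    show "continuous_on {..-2} dpsi"
      by (rule continuous_on_eq[of _ "\<lambda>_. 0"]) (auto simp: dpsi_def)
    show "continuous_on {-1..} dpsi"
      by (rule continuous_on_eq[of _ "\<lambda>_. 0"]) (auto simp: dpsi_def)
    show "continuous_on {-2..-1} dpsi"
      by (rule continuous_on_eq[of _ "\<lambda>s. -(6*(s+2) - 6*(s+2)^2)"])
         (auto simp: dpsi_def intro!: continuous_intros)
  qed auto
  moreover have "{..-2} \<union> {-2..-1} \<union> {-1..} = (UNIV::real set)" by auto
  ultimately show ?thesis by simp
qed

lemma dpsi_bound: "\<bar>dpsi s\<bar> \<le> 2"
proof -
  have key: "\<bar>6*(r) - 6*(r)^2\<bar> \<le> 2" if "0 \<le> r" "r \<le> 1" for r :: real
  proof -
    have "6*r - 6*r^2 \<ge> 0" using that by (simp add: power2_eq_square mult_left_le)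
    moreover have "6*r - 6*r^2 \<le> 2" 
    proof -
      have "0 \<le> (r - 1/2)^2" by simp
      then show ?thesis by (simp add: power2_eq_square algebra_simps)
    qed
    ultimately show ?thesis by simp
  qed
  then show ?thesis
  proof (cases "s \<le> -2 \<or> s \<ge> -1")
    case False
    then have "\<bar>6*(s+2) - 6*(s+2)^2\<bar> \<le> 2" by (intro key) auto
    then show ?thesis using False by (simp add: dpsi_def)
  qed (auto simp: dpsi_def)
qed

lemma psi_bounds: "0 \<le> psi s \<and> psi s \<le> 1"
proof -
  have "0 \<le> 3*r^2 - 2*r^3 \<and> 3*r^2 - 2*r^3 \<le> 1" if "0 \<le> r" "r \<le> 1" for r :: real
  proof
    have "3*r^2 - 2*r^3 = r^2 * (3 - 2*r)" by (simp add: algebra_simps power2_eq_square power3_eq_cube)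
    thus "0 \<le> 3*r^2 - 2*r^3" using that by simp
    have "1 - (3*r^2 - 2*r^3) = (1 - r)^2 * (1 + 2*r)" by (simp add: algebra_simps power2_eq_square power3_eq_cube)
    moreover have "(1 - r)^2 * (1 + 2*r) \<ge> 0" using that by simp
    ultimately show "3*r^2 - 2*r^3 \<le> 1" by linarith
  qed
  from this[of "s+2"] show ?thesis by (auto simp: psi_def)
qed

lemma psi_cont: "continuous_on UNIV psi"
  using psi_deriv by (meson DERIV_isCont continuous_at_imp_continuous_on)

lemma psi_0: "s \<ge> -1 \<Longrightarrow> psi s = 0" by (simp add: psi_def)
lemma psi_1: "s \<le> -2 \<Longrightarrow> psi s = 1" by (simp add: psi_def)
lemma dpsi_0: "s \<ge> -1 \<or> s \<le> -2 \<Longrightarrow> dpsi s = 0" by (auto simp: dpsi_def)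

lemma deriv_line:
  fixes G :: "'a::real_normed_vector \<Rightarrow> real"
  assumes "(G has_derivative D) (at (x + s *\<^sub>R e))"
  shows "((\<lambda>s. G (x + s *\<^sub>R e)) has_real_derivative D e) (at s)"
proof -
  have l: "((\<lambda>s. x + s *\<^sub>R e) has_derivative (\<lambda>t. t *\<^sub>R e)) (at s)"
    by (auto intro!: derivative_eq_intros)
  have "((\<lambda>s. G (x + s *\<^sub>R e)) has_derivative (\<lambda>t. D (t *\<^sub>R e))) (at s)"
    using has_derivative_compose[OF l assms] .
  moreover have "linear D" using assms has_derivative_linear by blast
  ultimately show ?thesis
    by (simp add: has_field_derivative_def linear_scale mult.commute[of _ "D e"])
qed

lemma aux_frac: "(c::real) \<ge> 0 \<Longrightarrow> J \<noteq> 0 \<Longrightarrow> \<bar>J\<bar> * c / (2*(c+1)) < \<bar>J\<bar>"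
proof -
  assume c: "c \<ge> 0" and J: "J \<noteq> 0"
  have "\<bar>J\<bar> * c < \<bar>J\<bar> * (2*(c+1))" using c J by (intro mult_strict_left_mono) auto
  thus ?thesis using c by (simp add: divide_less_eq)
qed

lemma int_partial_zero:
  fixes G :: "real^'n \<Rightarrow> real" and DG :: "real^'n \<Rightarrow> real^'n \<Rightarrow> real"
  assumes der: "\<And>x. (G has_derivative DG x) (at x)"
    and cont: "continuous_on UNIV (\<lambda>x. DG x e)"
    and supp: "\<And>x. norm x > R \<Longrightarrow> G x = 0"
    and e: "norm e \<le> 1" and R: "R \<ge> 0"
  shows "((\<lambda>x. DG x e) has_integral 0) UNIV"
proof -
  define f where "f x = DG x e" for x
  have f0: "f x = 0" if "norm x > R" for x
  proof -
    have "((\<lambda>_. 0::real) has_derivative (\<lambda>_. 0)) (at x)" by simp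
    hence "(G has_derivative (\<lambda>_. 0)) (at x)"
      by (rule has_derivative_transform_within_open[where s="{y. R < norm y}"])
         (use that supp in \<open>auto intro: open_Collect_less continuous_intros\<close>)
    hence "DG x = (\<lambda>_. 0)" using der has_derivative_unique by blast
    thus ?thesis by (simp add: f_def)
  qed
  obtain a where a: "cball (0::real^'n) (R+2) \<subseteq> cbox (-a) a"
    using bounded_subset_cbox_symmetric[of "cball (0::real^'n) (R+2)"] by auto
  define B where "B = cbox (-a) a"
  have outB: "norm x > R + 2" if "x \<notin> B" for x
    using that a by (force simp: B_def)
  have zeroG: "G x = 0" if "x \<notin> B" for x
  proof -
    have "R + 2 < norm x" using outB that by blast
    thus ?thesis by (intro supp) linarith
  qed
  have zerof: "f x = 0" if "x \<notin> B" for x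
  proof -
    have "R + 2 < norm x" using outB that by blast
    thus ?thesis by (intro f0) linarith
  qed
  have contG: "continuous_on UNIV G"
    using der by (meson has_derivative_continuous continuous_at_imp_continuous_on)
  obtain I where GI: "(G has_integral I) B"
    using integrable_continuous[of "-a" a G] continuous_on_subset[OF contG] by (auto simp: B_def)
  have GIU: "(G has_integral I) UNIV"
    by (rule has_integral_on_superset[OF GI]) (use zeroG in auto)
  have shift: "((\<lambda>x. G (x + h *\<^sub>R e)) has_integral I) UNIV" if h: "0 \<le> h" "h \<le> 1" for h
  proof -
    have "((\<lambda>x. G (1 *\<^sub>R x + h *\<^sub>R e)) has_integral (I /\<^sub>R 1 ^ DIM(real^'n)))
           (cbox ((-a - h *\<^sub>R e) /\<^sub>R 1) ((a - h *\<^sub>R e) /\<^sub>R 1))"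
      using has_integral_affinity'[OF GI[unfolded B_def], of 1 "h *\<^sub>R e"] by simp
    hence "((\<lambda>x. G (x + h *\<^sub>R e)) has_integral I) (cbox (-a - h *\<^sub>R e) (a - h *\<^sub>R e))" by simp
    moreover have "G (x + h *\<^sub>R e) = 0" if "x \<notin> cbox (-a - h *\<^sub>R e) (a - h *\<^sub>R e)" for x
    proof -
      have "x + h *\<^sub>R e \<notin> B" using that
        by (auto simp: B_def mem_box_cart algebra_simps)
      thus ?thesis using zeroG by blast
    qed
    ultimately show ?thesis by (rule has_integral_on_superset) auto
  qed
  have fcontB: "continuous_on B f" using cont by (auto simp: f_def intro: continuous_on_subset)
  obtain J where fJ: "(f has_integral J) B"
    using integrable_continuous[of "-a" a f] fcontB by (auto simp: B_def)
  have fJU: "(f has_integral J) UNIV"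
    by (rule has_integral_on_superset[OF fJ]) (use zerof in auto)
  have uc: "uniformly_continuous_on (cball 0 (R+2)) f"
    by (rule compact_uniformly_continuous) (use cont in \<open>auto simp: f_def intro: continuous_on_subset\<close>)
  have bound: "\<bar>J\<bar> \<le> \<epsilon> * measure lborel B" if eps: "\<epsilon> > 0" for \<epsilon>
  proof -
    obtain d where d: "d > 0" and dd: "\<And>x x'. x \<in> cball 0 (R+2) \<Longrightarrow> x' \<in> cball 0 (R+2) \<Longrightarrow> dist x' x < d \<Longrightarrow> dist (f x') (f x) < \<epsilon>"
      using uc eps unfolding uniformly_continuous_on_def by metis
    define h where "h = min (d/2) (1/2)"
    have h: "0 < h" "h < d" "h < 1" using d by (auto simp: h_def)
    define Q where "Q x = (G (x + h *\<^sub>R e) - G x) / h - f x" for x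
    have QI: "(Q has_integral (0 - J)) UNIV"
    proof -
      have "((\<lambda>x. (G (x + h *\<^sub>R e) - G x) / h) has_integral ((I - I) / h)) UNIV"
        using has_integral_diff[OF shift GIU] h by (intro has_integral_divide) auto
      then show ?thesis unfolding Q_def using has_integral_diff[OF _ fJU] by force
    qed
    have Qb: "\<bar>Q x\<bar> \<le> \<epsilon>" for x
    proof (cases "norm x \<le> R + 1")
      case True
      define \<phi> where "\<phi> s = G (x + s *\<^sub>R e) - s * f x" for s
      have dphi: "DERIV \<phi> s :> f (x + s *\<^sub>R e) - f x" for s
        unfolding \<phi>_def f_def
        by (auto intro!: derivative_eq_intros deriv_line der)
      obtain z where z: "0 < z" "z < h" "\<phi> h - \<phi> 0 = (h - 0) * (f (x + z *\<^sub>R e) - f x)"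
        using MVT2[OF h(1) dphi] by blast
      have "norm (x + z *\<^sub>R e) \<le> R + 2"
      proof -
        have "norm (x + z *\<^sub>R e) \<le> norm x + z * norm e" using norm_triangle_ineq[of x "z *\<^sub>R e"] z by simp
        also have "\<dots> \<le> R + 1 + 1 * 1" using True e z h by (intro add_mono mult_mono) auto
        finally show ?thesis by simp
      qed
      moreover have "dist (x + z *\<^sub>R e) x < d"
      proof -
        have "dist (x + z *\<^sub>R e) x = z * norm e" using z by (simp add: dist_norm)
        also have "\<dots> \<le> z" using e z by (simp add: mult_left_le)
        finally show ?thesis using z h by simp
      qed
      ultimately have "\<bar>f (x + z *\<^sub>R e) - f x\<bar> < \<epsilon>"
        using dd[of x "x + z *\<^sub>R e"] True by (auto simp: dist_real_def)
      moreover have "Q x = (\<phi> h - \<phi> 0) / h" using h by (simp add: Q_def \<phi>_def field_simps)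
      ultimately show ?thesis using z h by (simp add: abs_mult)
    next
      case False
      have "norm (x + h *\<^sub>R e) \<ge> norm x - h * norm e"
        using norm_triangle_ineq2[of x "- (h *\<^sub>R e)"] h by simp
      moreover have "h * norm e \<le> 1" using h e by (simp add: mult_le_one)
      ultimately have "norm (x + h *\<^sub>R e) > R" using False by linarith
      then show ?thesis using False supp f0 eps by (simp add: Q_def)
    qed
    have "(Q has_integral (0 - J)) B"
    proof -
      have "Q x = 0" if "x \<notin> B" for x
      proof -
        have "norm x > R + 2" using outB that by blast
        moreover have "norm (x + h *\<^sub>R e) \<ge> norm x - h * norm e"
          using norm_triangle_ineq2[of x "- (h *\<^sub>R e)"] h by simp
        moreover have "h * norm e \<le> 1" using h e by (simp add: mult_le_one)
        ultimately show ?thesis using supp f0 by (simp add: Q_def)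
      qed
      hence "(\<lambda>x. if x \<in> B then Q x else 0) = Q" by auto
      thus ?thesis using QI has_integral_restrict_UNIV[of B Q] by simp
    qed
    from has_integral_bound[OF _ this[unfolded B_def]] Qb eps
    show ?thesis by (simp add: B_def)
  qed
  have "J = 0"
  proof (rule ccontr)
    assume "J \<noteq> 0"
    have cpos: "measure lborel B \<ge> 0" by (rule measure_nonneg)
    define \<epsilon> where "\<epsilon> = \<bar>J\<bar> / (2 * (measure lborel B + 1))"
    have "\<epsilon> > 0" using \<open>J \<noteq> 0\<close> cpos unfolding \<epsilon>_def
    proof (intro divide_pos_pos)
      have "0 < measure lborel B + 1" using cpos by linarith
      then show "0 < 2 * (measure lborel B + 1)" by (rule mult_pos_pos[rotated]) simp
    qed (use \<open>J \<noteq> 0\<close> in auto)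
    from bound[OF this] have "\<bar>J\<bar> \<le> \<bar>J\<bar> * measure lborel B / (2 * (measure lborel B + 1))" by (simp add: \<epsilon>_def)
    moreover have "\<bar>J\<bar> * measure lborel B / (2 * (measure lborel B + 1)) < \<bar>J\<bar>"
      using aux_frac[OF cpos \<open>J \<noteq> 0\<close>] .
    ultimately show False by simp
  qed
  thus ?thesis using fJU by (simp add: f_def[abs_def])
qed

lemma lin_expand:
  fixes f :: "real^'n \<Rightarrow> 'b::real_vector"
  assumes "linear f"
  shows "f h = (\<Sum>i\<in>UNIV. h$i *\<^sub>R f (axis i 1))"
proof -
  have "h = (\<Sum>i\<in>UNIV. h$i *\<^sub>R axis i (1::real))"
    using basis_expansion[of h] by (simp add: scalar_mult_eq_scaleR)
  hence "f h = f (\<Sum>i\<in>UNIV. h$i *\<^sub>R axis i (1::real))" by simp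
  also have "\<dots> = (\<Sum>i\<in>UNIV. h$i *\<^sub>R f (axis i 1))"
    using assms by (simp add: linear_sum linear_scale)
  finally show ?thesis .
qed

lemma lin_inner:
  fixes D :: "real^'n \<Rightarrow> real"
  assumes "linear D"
  shows "D h = (\<chi> i. D (axis i 1)) \<bullet> h"
  using lin_expand[OF assms, of h] by (simp add: inner_vec_def mult.commute)

lemma lin_norm_bound:
  fixes f :: "real^'n \<Rightarrow> 'b::real_normed_vector"
  assumes "linear f"
  shows "norm (f h) \<le> (\<Sum>i\<in>UNIV. norm (f (axis i 1))) * norm h"
proof -
  have "norm (f h) = norm (\<Sum>i\<in>UNIV. h$i *\<^sub>R f (axis i 1))" using lin_expand[OF assms, of h] by simp
  also have "\<dots> \<le> (\<Sum>i\<in>UNIV. norm (h$i *\<^sub>R f (axis i 1)))" by (rule norm_sum)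
  also have "\<dots> \<le> (\<Sum>i\<in>UNIV. norm (f (axis i 1)) * norm h)"
    by (intro sum_mono) (simp add: mult.commute[of _ "norm h"] mult_right_mono component_le_norm_cart)
  also have "\<dots> = (\<Sum>i\<in>UNIV. norm (f (axis i 1))) * norm h" by (simp add: sum_distrib_right)
  finally show ?thesis .
qed

lemma cont_bound:
  fixes g :: "'a::metric_space \<Rightarrow> 'b::real_normed_vector"
  assumes "continuous_on K g" "compact K"
  shows "\<exists>M. \<forall>x\<in>K. norm (g x) \<le> M"
proof -
  have "bounded (g ` K)" using compact_continuous_image[OF assms] compact_imp_bounded by blast
  thus ?thesis by (auto simp: bounded_iff)
qed

lemma vec_has_derivative:
  fixes f :: "'a::real_normed_vector \<Rightarrow> real^'n"
  assumes "\<And>i. ((\<lambda>x. f x $ i) has_derivative (\<lambda>h. f' h $ i)) (at a within S)"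
  shows "(f has_derivative f') (at a within S)"
  using assms by (auto simp: has_derivative_componentwise_within[of f f'] Basis_vec_def inner_axis)

lemma vec_nth_has_derivative:
  fixes f :: "'a::real_normed_vector \<Rightarrow> real^'n"
  assumes "(f has_derivative f') F"
  shows "((\<lambda>x. f x $ i) has_derivative (\<lambda>h. f' h $ i)) F"
  using bounded_linear.has_derivative[OF bounded_linear_vec_nth assms] .

lemma defining_C2:
  assumes "defining_fun \<Omega> \<rho>"
  shows "(\<forall>x. (\<rho> has_derivative (\<lambda>h. grad \<rho> x \<bullet> h)) (at x)) \<and>
         continuous_on UNIV (grad \<rho>) \<and>
         (\<exists>DN. (\<forall>x. (grad \<rho> has_derivative DN x) (at x)) \<and> (\<forall>j. continuous_on UNIV (\<lambda>x. DN x (axis j 1))))"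
proof -
  have "Ck (Suc (Suc 0)) \<rho>" using assms by (simp add: defining_fun_def smooth_fun_def)
  then obtain f' where f'1: "\<And>x. (\<rho> has_derivative f' x) (at x)" and f'2: "\<And>i. Ck (Suc 0) (\<lambda>x. f' x (axis i 1))"
    by auto
  have gr: "grad \<rho> x = (\<chi> i. f' x (axis i 1))" for x
    using frechet_derivative_at[OF f'1[of x]] by (simp add: grad_def)
  have d1: "(\<rho> has_derivative (\<lambda>h. grad \<rho> x \<bullet> h)) (at x)" for x
  proof -
    have "f' x = (\<lambda>h. grad \<rho> x \<bullet> h)"
    proof
      fix h show "f' x h = grad \<rho> x \<bullet> h"
        using lin_inner[OF has_derivative_linear[OF f'1[of x]], of h] gr[of x] by simp
    qed
    thus ?thesis using f'1[of x] by simp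
  qed
  have "\<forall>i. \<exists>g. (\<forall>x. ((\<lambda>x. f' x (axis i 1)) has_derivative g x) (at x)) \<and> (\<forall>j. continuous_on UNIV (\<lambda>x. g x (axis j 1)))"
    using f'2 by simp
  then obtain G where G1: "\<And>i x. ((\<lambda>x. f' x (axis i 1)) has_derivative G i x) (at x)"
    and G2: "\<And>i j. continuous_on UNIV (\<lambda>x. G i x (axis j 1))" by metis
  have cont: "continuous_on UNIV (grad \<rho>)"
  proof -
    have "continuous_on UNIV (\<lambda>x. f' x (axis i 1))" for i
      using G1 by (meson has_derivative_continuous continuous_at_imp_continuous_on)
    hence "continuous_on UNIV (\<lambda>x. \<chi> i. f' x (axis i 1))" by (intro continuous_on_vec_lambda) auto
    moreover have "(\<lambda>x. \<chi> i. f' x (axis i 1)) = grad \<rho>" using gr by auto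
    ultimately show ?thesis by metis
  qed
  define DN where "DN x h = (\<chi> i. G i x h)" for x h
  have "(grad \<rho> has_derivative DN x) (at x)" for x
  proof -
    have "((\<lambda>x. \<chi> i. f' x (axis i 1)) has_derivative DN x) (at x)"
      by (rule vec_has_derivative) (simp add: DN_def G1)
    moreover have "(\<lambda>x. \<chi> i. f' x (axis i 1)) = grad \<rho>" using gr by auto
    ultimately show ?thesis by metis
  qed
  moreover have "continuous_on UNIV (\<lambda>x. DN x (axis j 1))" for j
    unfolding DN_def by (intro continuous_on_vec_lambda G2)
  ultimately show ?thesis using d1 cont by blast
qed

lemma half_cancel: "(c::real) > 0 \<Longrightarrow> e / (2*c) * c = e/2" by simp

lemma dir_dec:
  fixes f :: "'a::real_normed_vector \<Rightarrow> real"
  assumes "(f has_derivative D) (at x)" "D v < 0"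
  shows "\<exists>d>0. \<forall>s. 0 < s \<and> s < d \<longrightarrow> f (x + s *\<^sub>R v) < f x"
proof -
  have "((\<lambda>s. f (x + s *\<^sub>R v)) has_real_derivative D v) (at 0)"
    by (rule deriv_line) (use assms in simp)
  from DERIV_neg_dec_right[OF this assms(2)] show ?thesis by auto
qed

lemma dir_inc:
  fixes f :: "'a::real_normed_vector \<Rightarrow> real"
  assumes "(f has_derivative D) (at x)" "D v > 0"
  shows "\<exists>d>0. \<forall>s. 0 < s \<and> s < d \<longrightarrow> f (x + s *\<^sub>R v) > f x"
proof -
  have "((\<lambda>s. f (x + s *\<^sub>R v)) has_real_derivative D v) (at 0)"
    by (rule deriv_line) (use assms in simp)
  from DERIV_pos_inc_right[OF this assms(2)] show ?thesis by auto
qed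

context
  fixes \<Omega> :: "(real^'n) set" and \<rho> :: "real^'n \<Rightarrow> real"
  assumes dom: "bounded_smooth_domain \<Omega>" and rdef: "defining_fun \<Omega> \<rho>"
begin

lemma rho_deriv: "(\<rho> has_derivative (\<lambda>h. grad \<rho> x \<bullet> h)) (at x)"
  using defining_C2[OF rdef] by blast

lemma N_cont: "continuous_on UNIV (grad \<rho>)"
  using defining_C2[OF rdef] by blast

lemma rho_cont: "continuous_on UNIV \<rho>"
  using rho_deriv by (meson has_derivative_continuous continuous_at_imp_continuous_on)

lemma Omega_eq: "\<Omega> = {x. \<rho> x < 0}"
  using rdef by (simp add: defining_fun_def)

lemma N_nz: "\<rho> x = 0 \<Longrightarrow> grad \<rho> x \<noteq> 0"
  using rdef by (simp add: defining_fun_def)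

lemma Omega_open: "open \<Omega>" using dom by (simp add: bounded_smooth_domain_def)
lemma Omega_bounded: "bounded \<Omega>" using dom by (simp add: bounded_smooth_domain_def)
lemma cl_compact: "compact (closure \<Omega>)"
  using Omega_bounded by (simp add: compact_closure)

lemma closure_eq: "closure \<Omega> = {x. \<rho> x \<le> 0}"
proof
  have "closed {x. \<rho> x \<le> 0}"
    using rho_cont by (simp add: closed_Collect_le continuous_on_const)
  thus "closure \<Omega> \<subseteq> {x. \<rho> x \<le> 0}"
    by (rule closure_minimal[rotated]) (auto simp: Omega_eq)
next
  show "{x. \<rho> x \<le> 0} \<subseteq> closure \<Omega>"
  proof
    fix x assume "x \<in> {x. \<rho> x \<le> 0}"
    hence x: "\<rho> x \<le> 0" by simp
    show "x \<in> closure \<Omega>"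
    proof (cases "\<rho> x < 0")
      case True
      hence "x \<in> \<Omega>" using Omega_eq by simp
      thus ?thesis using closure_subset by blast
    next
      case False
      hence x0: "\<rho> x = 0" using x by simp
      let ?v = "- grad \<rho> x"
      have "grad \<rho> x \<bullet> ?v < 0" using N_nz[OF x0] by simp
      then obtain d where d: "d > 0" "\<And>s. 0 < s \<Longrightarrow> s < d \<Longrightarrow> \<rho> (x + s *\<^sub>R ?v) < \<rho> x"
        using dir_dec[OF rho_deriv] by metis
      show ?thesis unfolding closure_approachable
      proof (intro allI impI)
        fix e :: real assume e: "e > 0"
        define s where "s = min (d/2) (e / (2 * (norm (grad \<rho> x) + 1)))"
        have "0 \<le> norm (grad \<rho> x)" by simp
        hence npos: "0 < norm (grad \<rho> x) + 1" by linarith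
        hence "0 < 2 * (norm (grad \<rho> x) + 1)" by simp
        hence "0 < e / (2 * (norm (grad \<rho> x) + 1))" using e by simp
        hence s: "0 < s" "s < d" using d e by (auto simp: s_def)
        have "s * norm (grad \<rho> x) < e"
        proof -
          have "s * norm (grad \<rho> x) \<le> (e / (2 * (norm (grad \<rho> x) + 1))) * (norm (grad \<rho> x) + 1)"
            using s by (intro mult_mono) (auto simp: s_def)
          also have "\<dots> = e / 2" using half_cancel[OF npos] .
          finally show ?thesis using e by simp
        qed
        moreover have "x + s *\<^sub>R ?v \<in> \<Omega>" using d(2)[OF s] x0 Omega_eq by simp
        ultimately show "\<exists>y\<in>\<Omega>. dist y x < e"
          by (intro bexI[of _ "x + s *\<^sub>R ?v"]) (auto simp: dist_norm s(1) less_imp_le)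
      qed
    qed
  qed
qed

lemma frontier_eq: "frontier \<Omega> = {x. \<rho> x = 0}"
  using closure_eq Omega_open Omega_eq by (auto simp: frontier_def interior_open)

lemma normal_eq:
  assumes y: "y \<in> frontier \<Omega>"
  shows "outward_normal \<Omega> y = (1 / norm (grad \<rho> y)) *\<^sub>R grad \<rho> y"
proof -
  have "\<exists>\<nu>. \<exists>\<sigma>. defining_fun \<Omega> \<sigma> \<and> \<nu> = (1 / norm (grad \<sigma> y)) *\<^sub>R grad \<sigma> y"
    using rdef by blast
  from someI_ex[OF this] obtain \<sigma> where sdef: "defining_fun \<Omega> \<sigma>"
    and nu: "outward_normal \<Omega> y = (1 / norm (grad \<sigma> y)) *\<^sub>R grad \<sigma> y"
    unfolding outward_normal_def by blast
  have y0: "\<rho> y = 0" using y frontier_eq by auto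
  have s_eq: "\<Omega> = {x. \<sigma> x < 0}" using sdef by (simp add: defining_fun_def)
  have s_deriv: "(\<sigma> has_derivative (\<lambda>h. grad \<sigma> y \<bullet> h)) (at y)"
    using defining_C2[OF sdef] by blast
  have sy0: "\<sigma> y = 0"
  proof -
    have "continuous_on UNIV \<sigma>" using defining_C2[OF sdef]
      by (meson has_derivative_continuous continuous_at_imp_continuous_on)
    hence "closure \<Omega> \<subseteq> {x. \<sigma> x \<le> 0}"
      by (intro closure_minimal) (auto simp: s_eq closed_Collect_le continuous_on_const)
    moreover have "y \<in> closure \<Omega>" "y \<notin> \<Omega>" using y Omega_open by (auto simp: frontier_def interior_open)
    ultimately show ?thesis using s_eq by fastforce
  qed
  define a where "a = (1 / norm (grad \<rho> y)) *\<^sub>R grad \<rho> y"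
  define b where "b = (1 / norm (grad \<sigma> y)) *\<^sub>R grad \<sigma> y"
  have na: "grad \<rho> y \<noteq> 0" using N_nz[OF y0] .
  have nb: "grad \<sigma> y \<noteq> 0" using sdef sy0 by (simp add: defining_fun_def)
  have a1: "norm a = 1" using na by (simp add: a_def)
  have b1: "norm b = 1" using nb by (simp add: b_def)
  show ?thesis
  proof (rule ccontr)
    assume "outward_normal \<Omega> y \<noteq> (1 / norm (grad \<rho> y)) *\<^sub>R grad \<rho> y"
    hence ab: "a \<noteq> b" using nu by (simp add: a_def b_def)
    have "(norm (a - b))^2 = 2 - 2 * (a \<bullet> b)"
    proof -
      have "a \<bullet> a = 1" "b \<bullet> b = 1" using a1 b1 by (metis power2_norm_eq_inner power_one)+
      thus ?thesis by (simp add: power2_norm_eq_inner inner_diff_left inner_diff_right inner_commute)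
    qed
    moreover have "(norm (a - b))^2 > 0" using ab by simp
    ultimately have ab1: "a \<bullet> b < 1" by linarith
    have aa: "a \<bullet> a = 1" "b \<bullet> b = 1" using a1 b1 by (metis power2_norm_eq_inner power_one)+
    define h where "h = b - a"
    have "grad \<rho> y = norm (grad \<rho> y) *\<^sub>R a" using na by (simp add: a_def)
    hence "grad \<rho> y \<bullet> h = (norm (grad \<rho> y) *\<^sub>R a) \<bullet> (b - a)" by (simp add: h_def)
    also have "\<dots> = norm (grad \<rho> y) * (a \<bullet> b - 1)" using aa by (simp add: inner_diff_right algebra_simps)
    finally have "grad \<rho> y \<bullet> h = norm (grad \<rho> y) * (a \<bullet> b - 1)" .
    hence hr: "grad \<rho> y \<bullet> h < 0" using na ab1 by (simp add: mult_pos_neg)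
    have "grad \<sigma> y = norm (grad \<sigma> y) *\<^sub>R b" using nb by (simp add: b_def)
    hence "grad \<sigma> y \<bullet> h = (norm (grad \<sigma> y) *\<^sub>R b) \<bullet> (b - a)" by (simp add: h_def)
    also have "\<dots> = norm (grad \<sigma> y) * (1 - a \<bullet> b)" using aa by (simp add: inner_diff_right inner_commute)
    finally have "grad \<sigma> y \<bullet> h = norm (grad \<sigma> y) * (1 - a \<bullet> b)" .
    hence hs: "grad \<sigma> y \<bullet> h > 0" using nb ab1 by simp
    obtain d1 where d1: "d1 > 0" "\<And>s. 0 < s \<Longrightarrow> s < d1 \<Longrightarrow> \<rho> (y + s *\<^sub>R h) < \<rho> y"
      using dir_dec[OF rho_deriv hr] by metis
    obtain d2 where d2: "d2 > 0" "\<And>s. 0 < s \<Longrightarrow> s < d2 \<Longrightarrow> \<sigma> (y + s *\<^sub>R h) > \<sigma> y"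
      using dir_inc[OF s_deriv hs] by metis
    define s where "s = min d1 d2 / 2"
    have s: "0 < s" "s < d1" "s < d2" using d1 d2 by (auto simp: s_def)
    have "y + s *\<^sub>R h \<in> \<Omega>" using d1(2)[OF s(1,2)] y0 Omega_eq by simp
    moreover have "y + s *\<^sub>R h \<notin> \<Omega>" using d2(2)[OF s(1,3)] sy0 s_eq by simp
    ultimately show False by blast
  qed
qed

end

context
  fixes \<Omega> :: "(real^'n) set" and \<rho> :: "real^'n \<Rightarrow> real"
  assumes dom: "bounded_smooth_domain \<Omega>" and rdef: "defining_fun \<Omega> \<rho>"
begin

lemma near_boundary_bound:
  fixes g :: "real^'n \<Rightarrow> real" and Dg :: "real^'n \<Rightarrow> real^'n \<Rightarrow> real"
  assumes gder: "\<And>x. x \<in> closure \<Omega> \<Longrightarrow> (g has_derivative Dg x) (at x within closure \<Omega>)"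
    and gb: "\<And>x h. x \<in> closure \<Omega> \<Longrightarrow> \<bar>Dg x h\<bar> \<le> L * norm h"
    and g0: "\<And>y. y \<in> frontier \<Omega> \<Longrightarrow> g y = 0"
  shows "\<exists>C \<eta>. \<eta> > 0 \<and> C \<ge> 0 \<and> (\<forall>x\<in>\<Omega>. \<rho> x > -\<eta> \<longrightarrow> \<bar>g x\<bar> \<le> C * \<bar>\<rho> x\<bar>)"
proof -
  let ?K = "closure \<Omega>"
  let ?N = "grad \<rho>"
  note rho_cont = rho_cont[OF dom rdef] and N_cont = N_cont[OF dom rdef]
  note rho_deriv = rho_deriv[OF dom rdef] and Omega_eq = Omega_eq[OF dom rdef]
  have Kne: "?K \<noteq> {}" using dom by (auto simp: bounded_smooth_domain_def)
  obtain R where R: "\<And>x. x \<in> ?K \<Longrightarrow> norm x \<le> R"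
    using bounded_closure[OF Omega_bounded[OF dom rdef]] by (auto simp: bounded_iff)
  have fcont: "continuous_on ?K (\<lambda>x. \<bar>\<rho> x\<bar> + norm (?N x))"
    using rho_cont N_cont by (auto intro!: continuous_intros intro: continuous_on_subset)
  obtain x0 where x0: "x0 \<in> ?K" and x0min: "\<And>y. y \<in> ?K \<Longrightarrow> \<bar>\<rho> x0\<bar> + norm (?N x0) \<le> \<bar>\<rho> y\<bar> + norm (?N y)"
    using continuous_attains_inf[OF cl_compact[OF dom rdef] Kne fcont] by auto
  define \<mu> where "\<mu> = \<bar>\<rho> x0\<bar> + norm (?N x0)"
  have \<mu>pos: "\<mu> > 0"
  proof (cases "\<rho> x0 = 0")
    case True then show ?thesis using N_nz[OF dom rdef True] by (simp add: \<mu>_def)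
  next
    case False then show ?thesis by (simp add: \<mu>_def add_pos_nonneg)
  qed
  have uc: "uniformly_continuous_on (cball 0 (R+1)) ?N"
    by (rule compact_uniformly_continuous) (use N_cont in \<open>auto intro: continuous_on_subset\<close>)
  have "\<mu>/4 > 0" using \<mu>pos by simp
  then obtain \<delta> where \<delta>: "\<delta> > 0" and \<delta>N: "\<And>z z'. z \<in> cball 0 (R+1) \<Longrightarrow> z' \<in> cball 0 (R+1) \<Longrightarrow> dist z' z < \<delta> \<Longrightarrow> dist (?N z') (?N z) < \<mu>/4"
    using uc unfolding uniformly_continuous_on_def by metis
  define r where "r = min (\<delta>/2) 1"
  define c where "c = \<mu>/4"
  define \<eta> where "\<eta> = min (\<mu>/2) (c*r/2)"
  define L' where "L' = max L 0"
  have r: "0 < r" "r < \<delta>" "r \<le> 1" using \<delta> by (auto simp: r_def)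
  have c: "c > 0" using \<mu>pos by (simp add: c_def)
  have \<eta>: "\<eta> > 0" using \<mu>pos r c by (auto simp: \<eta>_def)
  show ?thesis
  proof (intro exI conjI ballI impI)
    show "\<eta> > 0" by fact
    show "L'/c \<ge> 0" using c by (simp add: L'_def)
    fix x assume xO: "x \<in> \<Omega>" and x\<eta>: "\<rho> x > -\<eta>"
    have xK: "x \<in> ?K" using xO closure_subset by blast
    have \<rho>x: "\<rho> x < 0" using xO Omega_eq by simp
    have "\<mu> \<le> \<bar>\<rho> x\<bar> + norm (?N x)" using x0min[OF xK] by (simp add: \<mu>_def)
    moreover have "\<bar>\<rho> x\<bar> < \<mu>/2" using x\<eta> \<rho>x by (auto simp: \<eta>_def)
    ultimately have Nx: "norm (?N x) > \<mu>/2" by linarith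
    have Nx0: "?N x \<noteq> 0" using Nx \<mu>pos by auto
    define e where "e = (1 / norm (?N x)) *\<^sub>R ?N x"
    have e1: "norm e = 1" using Nx0 by (simp add: e_def)
    have Ne: "?N x \<bullet> e = norm (?N x)"
      using Nx0 by (simp add: e_def power2_norm_eq_inner[symmetric] power2_eq_square)
    define \<phi> where "\<phi> s = \<rho> (x + s *\<^sub>R e)" for s
    have d\<phi>: "DERIV \<phi> s :> ?N (x + s *\<^sub>R e) \<bullet> e" for s
      unfolding \<phi>_def by (rule deriv_line[OF rho_deriv])
    have d\<phi>c: "?N (x + s *\<^sub>R e) \<bullet> e \<ge> c" if s: "0 \<le> s" "s \<le> r" for s
    proof -
      have "norm (x + s *\<^sub>R e) \<le> norm x + norm (s *\<^sub>R e)" by (rule norm_triangle_ineq)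
      also have "\<dots> \<le> R + 1" using R[OF xK] e1 s r by simp
      finally have z1: "x + s *\<^sub>R e \<in> cball 0 (R+1)" by simp
      have z2: "x \<in> cball 0 (R+1)" using R[OF xK] by simp
      have "dist (x + s *\<^sub>R e) x < \<delta>" using s r e1 by (simp add: dist_norm)
      hence "dist (?N (x + s *\<^sub>R e)) (?N x) < \<mu>/4" using \<delta>N[OF z2 z1] by simp
      hence nd: "norm (?N (x + s *\<^sub>R e) - ?N x) < \<mu>/4" by (simp add: dist_norm)
      have "\<bar>(?N (x + s *\<^sub>R e) - ?N x) \<bullet> e\<bar> \<le> norm (?N (x + s *\<^sub>R e) - ?N x)"
        using Cauchy_Schwarz_ineq2[of "?N (x + s *\<^sub>R e) - ?N x" e] e1 by simp
      hence "- norm (?N (x + s *\<^sub>R e) - ?N x) \<le> (?N (x + s *\<^sub>R e) - ?N x) \<bullet> e" by (simp add: abs_le_iff)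
      hence "(?N (x + s *\<^sub>R e) - ?N x) \<bullet> e \<ge> - (\<mu>/4)" using nd by linarith
      hence "?N (x + s *\<^sub>R e) \<bullet> e \<ge> ?N x \<bullet> e - \<mu>/4" by (simp add: inner_diff_left)
      thus ?thesis using Ne Nx by (simp add: c_def)
    qed
    have mvt: "\<phi> b - \<phi> a \<ge> (b - a) * c" if ab: "0 \<le> a" "a < b" "b \<le> r" for a b
    proof -
      obtain z where z: "a < z" "z < b" "\<phi> b - \<phi> a = (b - a) * (?N (x + z *\<^sub>R e) \<bullet> e)"
        using MVT2[OF ab(2), of \<phi> "\<lambda>s. ?N (x + s *\<^sub>R e) \<bullet> e"] d\<phi> by blast
      have "(b - a) * c \<le> (b - a) * (?N (x + z *\<^sub>R e) \<bullet> e)"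
        using d\<phi>c[of z] z ab by (intro mult_left_mono) auto
      thus ?thesis using z by simp
    qed
    have \<phi>0: "\<phi> 0 = \<rho> x" by (simp add: \<phi>_def)
    have "\<phi> r - \<phi> 0 \<ge> r * c" using mvt[of 0 r] r by simp
    moreover have "\<eta> \<le> r * c / 2" by (simp add: \<eta>_def mult.commute)
    moreover have "r * c > 0" using r c by simp
    ultimately have \<phi>r: "\<phi> r \<ge> 0" using x\<eta> \<phi>0 by linarith
    have "\<forall>s. 0 \<le> s \<and> s \<le> r \<longrightarrow> isCont \<phi> s" using d\<phi> DERIV_isCont by blast
    then obtain s1 where s1: "0 \<le> s1" "s1 \<le> r" "\<phi> s1 = 0"
      using IVT[of \<phi> 0 0 r] \<phi>0 \<rho>x \<phi>r r by auto
    have s1pos: "s1 > 0" using s1 \<phi>0 \<rho>x by (cases "s1 = 0") auto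
    have neg: "\<phi> s \<le> 0" if "0 \<le> s" "s \<le> s1" for s
    proof (cases "s = s1")
      case True thus ?thesis using s1 by simp
    next
      case False
      hence "\<phi> s1 - \<phi> s \<ge> (s1 - s) * c" using mvt[of s s1] that s1 by simp
      moreover have "(s1 - s) * c \<ge> 0" using that c by simp
      ultimately show ?thesis using s1 by simp
    qed
    have "\<phi> s1 - \<phi> 0 \<ge> s1 * c" using mvt[of 0 s1] s1 s1pos by simp
    hence s1b: "s1 \<le> \<bar>\<rho> x\<bar> / c" using s1 \<phi>0 \<rho>x c by (simp add: field_simps)
    define y where "y = x + s1 *\<^sub>R e"
    have yF: "y \<in> frontier \<Omega>" using s1 frontier_eq[OF dom rdef] by (simp add: y_def \<phi>_def)
    have segK: "closed_segment x y \<subseteq> ?K"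
    proof
      fix z assume "z \<in> closed_segment x y"
      then obtain u where u: "0 \<le> u" "u \<le> 1" "z = (1 - u) *\<^sub>R x + u *\<^sub>R y" by (auto simp: in_segment)
      hence "z = x + (u * s1) *\<^sub>R e" by (simp add: y_def algebra_simps)
      moreover have "\<phi> (u * s1) \<le> 0" using u s1 by (intro neg) (auto simp: mult_left_le_one_le)
      ultimately show "z \<in> ?K" using closure_eq[OF dom rdef] by (simp add: \<phi>_def)
    qed
    have "norm (g x - g y) \<le> L' * norm (x - y)"
    proof (rule differentiable_bound[OF convex_closed_segment])
      show "(g has_derivative Dg z) (at z within closed_segment x y)" if "z \<in> closed_segment x y" for z
        using has_derivative_subset[OF gder segK] that segK by blast
      show "onorm (Dg z) \<le> L'" if "z \<in> closed_segment x y" for z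
      proof (rule onorm_le)
        fix h
        have "\<bar>Dg z h\<bar> \<le> L * norm h" using gb that segK by blast
        also have "\<dots> \<le> L' * norm h" by (simp add: L'_def mult_right_mono)
        finally show "norm (Dg z h) \<le> L' * norm h" by simp
      qed
    qed auto
    moreover have "g y = 0" using g0 yF by blast
    moreover have "norm (x - y) = s1" using e1 s1 by (simp add: y_def)
    ultimately have "\<bar>g x\<bar> \<le> L' * s1" by simp
    also have "\<dots> \<le> L' * (\<bar>\<rho> x\<bar> / c)" using s1b by (intro mult_left_mono) (auto simp: L'_def)
    finally show "\<bar>g x\<bar> \<le> L' / c * \<bar>\<rho> x\<bar>" by simp
  qed
qed

end

context
  fixes \<Omega> :: "(real^'n) set" and \<rho> :: "real^'n \<Rightarrow> real"
  assumes dom: "bounded_smooth_domain \<Omega>" and rdef: "defining_fun \<Omega> \<rho>"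
begin

lemma at_interior_cl: "x \<in> \<Omega> \<Longrightarrow> at x within closure \<Omega> = at x"
proof -
  assume "x \<in> \<Omega>"
  moreover have "\<Omega> \<subseteq> interior (closure \<Omega>)"
    by (rule interior_maximal[OF closure_subset Omega_open[OF dom rdef]])
  ultimately show ?thesis by (intro at_within_interior) blast
qed

lemma ident:
  fixes H :: "real^'n \<Rightarrow> real^'n" and DH :: "real^'n \<Rightarrow> real^'n \<Rightarrow> real^'n"
  assumes Hder: "\<And>x. x \<in> closure \<Omega> \<Longrightarrow> (H has_derivative DH x) (at x within closure \<Omega>)"
    and DHcont: "\<And>j. continuous_on (closure \<Omega>) (\<lambda>x. DH x (axis j 1))"
    and eps: "\<epsilon> > 0"
  shows "((\<lambda>x. psi (\<rho> x / \<epsilon>) * (\<Sum>i\<in>UNIV. DH x (axis i 1) $ i) + dpsi (\<rho> x / \<epsilon>) / \<epsilon> * (H x \<bullet> grad \<rho> x)) has_integral 0) \<Omega>"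
proof -
  let ?K = "closure \<Omega>"
  let ?N = "grad \<rho>"
  note rho_cont = rho_cont[OF dom rdef] and N_cont = N_cont[OF dom rdef]
  note rho_deriv = rho_deriv[OF dom rdef] and Omega_eq = Omega_eq[OF dom rdef]
  have Hcont: "continuous_on ?K H"
    using Hder by (meson has_derivative_continuous continuous_on_eq_continuous_within)
  obtain R where R: "\<And>x. x \<in> ?K \<Longrightarrow> norm x \<le> R"
    using bounded_closure[OF Omega_bounded[OF dom rdef]] by (auto simp: bounded_iff)
  have R0: "R \<ge> 0"
  proof -
    obtain x where "x \<in> \<Omega>" using dom by (auto simp: bounded_smooth_domain_def)
    hence "norm x \<le> R" using R closure_subset by blast
    thus ?thesis by (meson norm_ge_zero order_trans)
  qed
  define cf where "cf x = psi (\<rho> x / \<epsilon>)" for x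
  define dcf where "dcf x h = dpsi (\<rho> x / \<epsilon>) * ((?N x \<bullet> h) / \<epsilon>)" for x h
  have cfder: "(cf has_derivative dcf x) (at x)" for x
  proof -
    have r1: "((\<lambda>y. \<rho> y / \<epsilon>) has_derivative (\<lambda>h. (?N x \<bullet> h) / \<epsilon>)) (at x)"
      using rho_deriv[of x] eps by (auto intro!: derivative_eq_intros)
    have r2: "(psi has_derivative (\<lambda>t. dpsi (\<rho> x / \<epsilon>) * t)) (at (\<rho> x / \<epsilon>))"
      using psi_deriv[of "\<rho> x / \<epsilon>"] by (simp add: has_field_derivative_def)
    show ?thesis using has_derivative_compose[OF r1 r2] by (simp add: cf_def[abs_def] dcf_def[abs_def])
  qed
  have cfcont: "continuous_on UNIV cf"
    unfolding cf_def by (intro continuous_on_compose2[OF psi_cont] continuous_intros rho_cont) (use eps in auto)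
  define U1 where "U1 = {x. \<rho> x < -\<epsilon>/2}"
  define U2 where "U2 = {x. \<rho> x > -\<epsilon>}"
  have oU1: "open U1" unfolding U1_def by (rule open_Collect_less[OF rho_cont continuous_on_const])
  have oU2: "open U2" unfolding U2_def by (rule open_Collect_less[OF continuous_on_const rho_cont])
  have U1O: "U1 \<subseteq> \<Omega>" using eps by (auto simp: U1_def Omega_eq)
  have U12: "U1 \<union> U2 = UNIV" using eps by (auto simp: U1_def U2_def)
  have z1: "cf x = 0" if "x \<in> U2" for x
    using that eps by (auto simp: U2_def cf_def field_simps intro!: psi_0)
  have z2: "dpsi (\<rho> x / \<epsilon>) = 0" if "x \<in> U2" for x
    using that eps by (auto simp: U2_def field_simps intro!: dpsi_0)
  define G where "G i x = (if x \<in> U1 then cf x * H x $ i else 0)" for i x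
  define DG where "DG i x h = (if x \<in> U1 then cf x * (DH x h $ i) + dcf x h * H x $ i else 0)" for i x h
  have Gder: "(G i has_derivative DG i x) (at x)" for i x
  proof -
    consider "x \<in> U1" | "x \<in> U2" using U12 by blast
    then show ?thesis
    proof cases
      case 1
      have xO: "x \<in> \<Omega>" using 1 U1O by blast
      have "(H has_derivative DH x) (at x)"
        using Hder[of x] xO closure_subset at_interior_cl[OF xO] by auto
      hence "((\<lambda>y. H y $ i) has_derivative (\<lambda>h. DH x h $ i)) (at x)" by (rule vec_nth_has_derivative)
      hence "((\<lambda>y. cf y * H y $ i) has_derivative (\<lambda>h. cf x * (DH x h $ i) + dcf x h * H x $ i)) (at x)"
        using cfder[of x] by (intro has_derivative_mult) auto
      moreover have "DG i x = (\<lambda>h. cf x * (DH x h $ i) + dcf x h * H x $ i)" using 1 by (auto simp: DG_def)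
      ultimately have "((\<lambda>y. cf y * H y $ i) has_derivative DG i x) (at x)" by simp
      thus ?thesis by (rule has_derivative_transform_within_open[OF _ oU1 1]) (simp add: G_def)
    next
      case 2
      have "((\<lambda>_. 0) has_derivative (\<lambda>_. 0)) (at x)" by simp
      moreover have "DG i x = (\<lambda>_. 0)" using 2 z1 z2 by (auto simp: DG_def dcf_def)
      ultimately have "((\<lambda>_. 0) has_derivative DG i x) (at x)" by simp
      thus ?thesis by (rule has_derivative_transform_within_open[OF _ oU2 2]) (auto simp: G_def z1)
    qed
  qed
  have DGcont: "continuous_on UNIV (\<lambda>x. DG i x (axis i 1))" for i
  proof -
    have "continuous_on (U1 \<union> U2) (\<lambda>x. DG i x (axis i 1))"
    proof (rule continuous_on_open_Un[OF oU1 oU2])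
      have U1K: "U1 \<subseteq> ?K" using U1O closure_subset by blast
      have "continuous_on U1 (\<lambda>x. cf x * (DH x (axis i 1) $ i) + dcf x (axis i 1) * H x $ i)"
        unfolding dcf_def
        by (intro continuous_intros continuous_on_subset[OF cfcont] continuous_on_subset[OF DHcont U1K]
              continuous_on_subset[OF Hcont U1K] continuous_on_subset[OF N_cont]
              continuous_on_compose2[OF dpsi_cont] continuous_on_subset[OF rho_cont]) (use eps in auto)
      thus "continuous_on U1 (\<lambda>x. DG i x (axis i 1))"
        by (rule continuous_on_eq) (auto simp: DG_def)
      show "continuous_on U2 (\<lambda>x. DG i x (axis i 1))"
        by (rule continuous_on_eq[of _ "\<lambda>_. 0"]) (auto simp: DG_def z1 z2 dcf_def)
    qed
    thus ?thesis using U12 by simp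
  qed
  have Gsupp: "G i x = 0" if "norm x > R" for i x
  proof -
    have "x \<notin> U1" using that R U1O closure_subset by force
    thus ?thesis by (simp add: G_def)
  qed
  have each: "((\<lambda>x. DG i x (axis i 1)) has_integral 0) UNIV" for i
  proof (rule int_partial_zero[where G="G i" and R=R])
    show "(G i has_derivative DG i x) (at x)" for x by (rule Gder)
    show "continuous_on UNIV (\<lambda>x. DG i x (axis i 1))" by (rule DGcont)
    show "G i x = 0" if "R < norm x" for x using Gsupp that by blast
  qed (simp_all add: R0)
  have "((\<lambda>x. \<Sum>i\<in>UNIV. DG i x (axis i 1)) has_integral (\<Sum>i\<in>(UNIV::'n set). 0)) UNIV"
    by (rule has_integral_sum) (use each in auto)
  hence sumI: "((\<lambda>x. \<Sum>i\<in>UNIV. DG i x (axis i 1)) has_integral 0) UNIV" by simp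
  define F where "F x = psi (\<rho> x / \<epsilon>) * (\<Sum>i\<in>UNIV. DH x (axis i 1) $ i) + dpsi (\<rho> x / \<epsilon>) / \<epsilon> * (H x \<bullet> grad \<rho> x)" for x
  have pw: "(\<Sum>i\<in>UNIV. DG i x (axis i 1)) = (if x \<in> \<Omega> then F x else 0)" for x
  proof (cases "x \<in> U1")
    case True
    hence xO: "x \<in> \<Omega>" using U1O by blast
    have "(\<Sum>i\<in>UNIV. DG i x (axis i 1)) = (\<Sum>i\<in>UNIV. cf x * (DH x (axis i 1) $ i) + dpsi (\<rho> x / \<epsilon>) / \<epsilon> * (H x $ i * ?N x $ i))"
      using True by (intro sum.cong) (auto simp: DG_def dcf_def inner_axis)
    also have "\<dots> = cf x * (\<Sum>i\<in>UNIV. DH x (axis i 1) $ i) + dpsi (\<rho> x / \<epsilon>) / \<epsilon> * (\<Sum>i\<in>UNIV. H x $ i * ?N x $ i)"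
      by (simp add: sum.distrib sum_distrib_left)
    also have "\<dots> = F x" by (simp add: F_def cf_def inner_vec_def)
    finally show ?thesis using xO by simp
  next
    case False
    hence "x \<in> U2" using U12 by blast
    hence "F x = 0" using z1 z2 by (simp add: F_def cf_def)
    thus ?thesis using False by (simp add: DG_def)
  qed
  have "((\<lambda>x. if x \<in> \<Omega> then F x else 0) has_integral 0) UNIV" using sumI pw by simp
  hence "(F has_integral 0) \<Omega>" by (simp add: has_integral_restrict_UNIV)
  thus ?thesis by (simp add: F_def[abs_def])
qed

end

lemma cont_bound0:
  fixes g :: "'a::metric_space \<Rightarrow> 'b::real_normed_vector"
  assumes "continuous_on K g" "compact K"
  shows "\<exists>M\<ge>0. \<forall>x\<in>K. norm (g x) \<le> M"
proof -
  obtain M where "\<forall>x\<in>K. norm (g x) \<le> M" using cont_bound[OF assms] by blast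
  thus ?thesis by (intro exI[of _ "max M 0"]) auto
qed

lemma lin_bound0:
  fixes f :: "real^'n \<Rightarrow> real^'n \<Rightarrow> 'b::real_normed_vector"
  assumes lin: "\<And>x. x \<in> K \<Longrightarrow> linear (f x)" and cont: "\<And>j. continuous_on K (\<lambda>x. f x (axis j 1))"
    and K: "compact K"
  shows "\<exists>M\<ge>0. \<forall>x\<in>K. \<forall>h. norm (f x h) \<le> M * norm h"
proof -
  have "continuous_on K (\<lambda>x. \<Sum>j\<in>UNIV. norm (f x (axis j 1)))"
    by (intro continuous_intros cont)
  then obtain M where M: "M \<ge> 0" "\<And>x. x \<in> K \<Longrightarrow> norm (\<Sum>j\<in>UNIV. norm (f x (axis j 1))) \<le> M"
    using cont_bound0[OF _ K] by blast
  show ?thesis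
  proof (intro exI[of _ M] conjI ballI allI)
    fix x h assume x: "x \<in> K"
    have "norm (f x h) \<le> (\<Sum>j\<in>UNIV. norm (f x (axis j 1))) * norm h" by (rule lin_norm_bound[OF lin[OF x]])
    also have "\<dots> \<le> M * norm h" using M(2)[OF x] by (intro mult_right_mono) auto
    finally show "norm (f x h) \<le> M * norm h" .
  qed (use M in auto)
qed

context
  fixes \<Omega> :: "(real^'n) set" and \<rho> :: "real^'n \<Rightarrow> real"
  assumes dom: "bounded_smooth_domain \<Omega>" and rdef: "defining_fun \<Omega> \<rho>"
begin

lemma div_zero:
  fixes H :: "real^'n \<Rightarrow> real^'n" and DH :: "real^'n \<Rightarrow> real^'n \<Rightarrow> real^'n"
  assumes Hder: "\<And>x. x \<in> closure \<Omega> \<Longrightarrow> (H has_derivative DH x) (at x within closure \<Omega>)"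
    and DHcont: "\<And>j. continuous_on (closure \<Omega>) (\<lambda>x. DH x (axis j 1))"
    and Hbd: "\<And>y. y \<in> frontier \<Omega> \<Longrightarrow> H y \<bullet> grad \<rho> y = 0"
  shows "((\<lambda>x. \<Sum>i\<in>UNIV. DH x (axis i 1) $ i) has_integral 0) \<Omega>"
proof -
  let ?K = "closure \<Omega>"
  let ?N = "grad \<rho>"
  note N_cont = N_cont[OF dom rdef] and Omega_eq = Omega_eq[OF dom rdef]
  note K = cl_compact[OF dom rdef]
  obtain DN where DN1: "\<And>x. (?N has_derivative DN x) (at x)" and DN2: "\<And>j. continuous_on UNIV (\<lambda>x. DN x (axis j 1))"
    using defining_C2[OF rdef] by blast
  have Hcont: "continuous_on ?K H"
    using Hder by (meson has_derivative_continuous continuous_on_eq_continuous_within)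
  obtain MH where MH: "MH \<ge> 0" "\<And>x. x \<in> ?K \<Longrightarrow> norm (H x) \<le> MH"
    using cont_bound0[OF Hcont K] by blast
  obtain MN where MN: "MN \<ge> 0" "\<And>x. x \<in> ?K \<Longrightarrow> norm (?N x) \<le> MN"
    using cont_bound0[OF continuous_on_subset[OF N_cont] K] by blast
  obtain MD where MD: "MD \<ge> 0" "\<And>x h. x \<in> ?K \<Longrightarrow> norm (DH x h) \<le> MD * norm h"
    using lin_bound0[OF has_derivative_linear[OF Hder] DHcont K] by blast
  obtain MDN where MDN: "MDN \<ge> 0" "\<And>x h. x \<in> ?K \<Longrightarrow> norm (DN x h) \<le> MDN * norm h"
    using lin_bound0[OF has_derivative_linear[OF DN1] continuous_on_subset[OF DN2] K] by blast
  define divH where "divH x = (\<Sum>i\<in>UNIV. DH x (axis i 1) $ i)" for x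
  have divcont: "continuous_on ?K divH" unfolding divH_def by (intro continuous_intros DHcont)
  obtain Mdiv where Mdiv: "Mdiv \<ge> 0" "\<And>x. x \<in> ?K \<Longrightarrow> norm (divH x) \<le> Mdiv"
    using cont_bound0[OF divcont K] by blast
  define g where "g x = H x \<bullet> ?N x" for x
  define Dg where "Dg x h = H x \<bullet> DN x h + DH x h \<bullet> ?N x" for x h
  have gder: "(g has_derivative Dg x) (at x within ?K)" if "x \<in> ?K" for x
    unfolding g_def[abs_def] Dg_def[abs_def]
    by (rule has_derivative_inner[OF Hder[OF that] has_derivative_at_withinI[OF DN1]])
  have gb: "\<bar>Dg x h\<bar> \<le> (MH * MDN + MD * MN) * norm h" if x: "x \<in> ?K" for x h
  proof -
    have "\<bar>H x \<bullet> DN x h\<bar> \<le> norm (H x) * norm (DN x h)" by (rule Cauchy_Schwarz_ineq2)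
    also have "\<dots> \<le> MH * (MDN * norm h)" using MH MDN x by (intro mult_mono) auto
    finally have 1: "\<bar>H x \<bullet> DN x h\<bar> \<le> MH * (MDN * norm h)" .
    have "\<bar>DH x h \<bullet> ?N x\<bar> \<le> norm (DH x h) * norm (?N x)" by (rule Cauchy_Schwarz_ineq2)
    also have "\<dots> \<le> (MD * norm h) * MN" using MD MN x by (intro mult_mono) auto
    finally have 2: "\<bar>DH x h \<bullet> ?N x\<bar> \<le> (MD * norm h) * MN" .
    have "\<bar>Dg x h\<bar> \<le> \<bar>H x \<bullet> DN x h\<bar> + \<bar>DH x h \<bullet> ?N x\<bar>" by (simp add: Dg_def abs_triangle_ineq)
    also have "\<dots> \<le> MH * (MDN * norm h) + (MD * norm h) * MN" using 1 2 by linarith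
    also have "\<dots> = (MH * MDN + MD * MN) * norm h" by (simp add: algebra_simps)
    finally show ?thesis .
  qed
  have g0: "g y = 0" if "y \<in> frontier \<Omega>" for y using Hbd[OF that] by (simp add: g_def)
  obtain C \<eta> where \<eta>: "\<eta> > 0" and C: "C \<ge> 0" and Cb: "\<And>x. x \<in> \<Omega> \<Longrightarrow> \<rho> x > -\<eta> \<Longrightarrow> \<bar>g x\<bar> \<le> C * \<bar>\<rho> x\<bar>"
    using near_boundary_bound[OF dom rdef gder gb g0] by blast
  define \<epsilon> where "\<epsilon> k = \<eta>/2 * inverse (real (Suc k))" for k
  have \<epsilon>pos: "\<epsilon> k > 0" for k using \<eta> by (simp add: \<epsilon>_def)
  have \<epsilon>le: "\<epsilon> k \<le> \<eta>/2" for k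
  proof -
    have "inverse (real (Suc k)) \<le> 1" by (simp add: inverse_le_1_iff)
    thus ?thesis using \<eta> unfolding \<epsilon>_def by (simp add: mult_left_le)
  qed
  have \<epsilon>lim: "\<epsilon> \<longlonglongrightarrow> 0"
    unfolding \<epsilon>_def using tendsto_mult_right_zero[OF LIMSEQ_inverse_real_of_nat, of "\<eta>/2"] by simp
  define f where "f k x = psi (\<rho> x / \<epsilon> k) * divH x + dpsi (\<rho> x / \<epsilon> k) / \<epsilon> k * g x" for k x
  have fI: "(f k has_integral 0) \<Omega>" for k
    using ident[OF dom rdef Hder DHcont \<epsilon>pos[of k]] by (simp add: f_def[abs_def] divH_def g_def)
  have lmeas: "\<Omega> \<in> lmeasurable"
    by (rule lmeasurable_open[OF Omega_bounded[OF dom rdef] Omega_open[OF dom rdef]])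
  have le: "norm (f k x) \<le> Mdiv + 4 * C" if x: "x \<in> \<Omega>" for k x
  proof -
    let ?s = "\<rho> x / \<epsilon> k"
    have xK: "x \<in> ?K" using x closure_subset by blast
    have a: "\<bar>psi ?s * divH x\<bar> \<le> Mdiv"
    proof -
      have "\<bar>psi ?s * divH x\<bar> = \<bar>psi ?s\<bar> * \<bar>divH x\<bar>" by (rule abs_mult)
      also have "\<dots> \<le> 1 * Mdiv" using psi_bounds[of ?s] Mdiv(2)[OF xK] by (intro mult_mono) auto
      finally show ?thesis by simp
    qed
    have b: "\<bar>dpsi ?s / \<epsilon> k * g x\<bar> \<le> 4 * C"
    proof (cases "dpsi ?s = 0")
      case True thus ?thesis using C by simp
    next
      case False
      hence "\<not> (?s \<ge> -1 \<or> ?s \<le> -2)" using dpsi_0 by blast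
      hence "?s > -2" by simp
      hence r2: "\<rho> x > -2 * \<epsilon> k" using \<epsilon>pos[of k] by (simp add: field_simps)
      have \<rho>x: "\<rho> x < 0" using x Omega_eq by simp
      have "\<rho> x > -\<eta>" using r2 \<epsilon>le[of k] by linarith
      hence "\<bar>g x\<bar> \<le> C * \<bar>\<rho> x\<bar>" using Cb x by blast
      also have "\<dots> \<le> C * (2 * \<epsilon> k)" using r2 \<rho>x C by (intro mult_left_mono) auto
      finally have gx: "\<bar>g x\<bar> \<le> C * (2 * \<epsilon> k)" .
      have "\<bar>dpsi ?s / \<epsilon> k * g x\<bar> = \<bar>dpsi ?s\<bar> * \<bar>g x\<bar> / \<epsilon> k"
        using \<epsilon>pos[of k] by (simp add: abs_mult)
      also have "\<dots> \<le> 2 * (C * (2 * \<epsilon> k)) / \<epsilon> k"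
        using dpsi_bound[of ?s] gx \<epsilon>pos[of k] by (intro divide_right_mono mult_mono) auto
      also have "\<dots> = 4 * C" using \<epsilon>pos[of k] by simp
      finally show ?thesis .
    qed
    have "norm (f k x) \<le> \<bar>psi ?s * divH x\<bar> + \<bar>dpsi ?s / \<epsilon> k * g x\<bar>"
      unfolding f_def real_norm_def by (rule abs_triangle_ineq)
    thus ?thesis using a b by linarith
  qed
  have lim: "(\<lambda>k. f k x) \<longlonglongrightarrow> divH x" if x: "x \<in> \<Omega>" for x
  proof (rule tendsto_eventually)
    have \<rho>x: "\<rho> x < 0" using x Omega_eq by simp
    hence "-\<rho> x / 2 > 0" by simp
    from order_tendstoD(2)[OF \<epsilon>lim this]
    show "\<forall>\<^sub>F k in sequentially. f k x = divH x"
    proof (rule eventually_mono)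
      fix k assume k: "\<epsilon> k < -\<rho> x / 2"
      hence "\<rho> x / \<epsilon> k < -2" using \<epsilon>pos[of k] by (simp add: field_simps)
      hence "psi (\<rho> x / \<epsilon> k) = 1" "dpsi (\<rho> x / \<epsilon> k) = 0" by (auto intro!: psi_1 dpsi_0)
      thus "f k x = divH x" by (simp add: f_def)
    qed
  qed
  have DC: "divH integrable_on \<Omega>" "(\<lambda>k. integral \<Omega> (f k)) \<longlonglongrightarrow> integral \<Omega> divH"
  proof -
    have fint: "f k integrable_on \<Omega>" for k using fI by blast
    have hint: "(\<lambda>_. Mdiv + 4 * C) integrable_on \<Omega>" by (rule integrable_on_const[OF lmeas])
    show "divH integrable_on \<Omega>" "(\<lambda>k. integral \<Omega> (f k)) \<longlonglongrightarrow> integral \<Omega> divH"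
      using dominated_convergence[OF fint hint le lim] by auto
  qed
  have "(\<lambda>k. integral \<Omega> (f k)) = (\<lambda>_. 0)" using fI by (auto simp: integral_unique)
  hence "(\<lambda>k. integral \<Omega> (f k)) \<longlonglongrightarrow> 0" by simp
  hence "integral \<Omega> divH = 0" using LIMSEQ_unique[OF DC(2)] by blast
  moreover have "(divH has_integral integral \<Omega> divH) \<Omega>" using DC(1) by (rule integrable_integral)
  ultimately have "(divH has_integral 0) \<Omega>" by simp
  thus ?thesis by (simp add: divH_def[abs_def])
qed

end

lemma deriv_unique_dir:
  fixes F :: "'a::real_normed_vector \<Rightarrow> real"
  assumes D1: "(F has_derivative D1) (at y within S)" and D2: "(F has_derivative D2) (at y within S)"
    and d: "d > 0" and seg: "\<And>s. 0 \<le> s \<Longrightarrow> s \<le> d \<Longrightarrow> y + s *\<^sub>R w \<in> S"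
  shows "D1 w = D2 w"
proof -
  let ?p = "\<lambda>s::real. y + s *\<^sub>R w"
  have p: "(?p has_derivative (\<lambda>s. s *\<^sub>R w)) (at 0 within {0..d})" by (auto intro!: derivative_eq_intros)
  have img: "?p ` {0..d} \<subseteq> S" using seg by auto
  have l1: "linear D1" "linear D2" using D1 D2 has_derivative_linear by blast+
  have "((F \<circ> ?p) has_derivative (D1 \<circ> (\<lambda>s. s *\<^sub>R w))) (at 0 within {0..d})"
    using diff_chain_within[OF p, of F D1] has_derivative_subset[OF D1 img] by simp
  moreover have "D1 \<circ> (\<lambda>s. s *\<^sub>R w) = (\<lambda>s. s *\<^sub>R D1 w)" using l1 by (auto simp: linear_scale)
  ultimately have v1: "((F \<circ> ?p) has_vector_derivative D1 w) (at 0 within {0..d})"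
    by (simp add: has_vector_derivative_def)
  have "((F \<circ> ?p) has_derivative (D2 \<circ> (\<lambda>s. s *\<^sub>R w))) (at 0 within {0..d})"
    using diff_chain_within[OF p, of F D2] has_derivative_subset[OF D2 img] by simp
  moreover have "D2 \<circ> (\<lambda>s. s *\<^sub>R w) = (\<lambda>s. s *\<^sub>R D2 w)" using l1 by (auto simp: linear_scale)
  ultimately have v2: "((F \<circ> ?p) has_vector_derivative D2 w) (at 0 within {0..d})"
    by (simp add: has_vector_derivative_def)
  have nb: "at (0::real) within {0..d} \<noteq> bot" using d by (simp add: at_within_Icc_at_right)
  show ?thesis by (rule vector_derivative_unique_within[OF nb v1 v2])
qed

lemma int_cont:
  fixes f :: "real^'n \<Rightarrow> real"
  assumes b: "bounded \<Omega>" and o: "open \<Omega>" and c: "continuous_on (closure \<Omega>) f"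
  shows "f integrable_on \<Omega>"
proof -
  have lm: "\<Omega> \<in> lmeasurable" by (rule lmeasurable_open[OF b o])
  hence sl: "\<Omega> \<in> sets lebesgue" by (simp add: fmeasurableD)
  obtain M where M: "\<And>x. x \<in> closure \<Omega> \<Longrightarrow> norm (f x) \<le> M"
    using cont_bound[OF c compact_closure[THEN iffD2, OF b]] by blast
  show ?thesis
  proof (rule measurable_bounded_by_integrable_imp_integrable_real)
    show "f \<in> borel_measurable (lebesgue_on \<Omega>)"
      by (rule continuous_imp_measurable_on_sets_lebesgue[OF continuous_on_subset[OF c closure_subset] sl])
    show "(\<lambda>_. M) integrable_on \<Omega>" by (rule integrable_on_const[OF lm])
    show "\<bar>f x\<bar> \<le> M" if "x \<in> \<Omega>" for x using M[of x] that closure_subset by auto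
  qed (rule sl)
qed

lemma int_const_bound:
  fixes f :: "real^'n \<Rightarrow> real"
  assumes lm: "\<Omega> \<in> lmeasurable" and fi: "f integrable_on \<Omega>" and le: "\<And>x. x \<in> \<Omega> \<Longrightarrow> \<bar>f x\<bar> \<le> e"
  shows "\<bar>integral \<Omega> f\<bar> \<le> e * measure lebesgue \<Omega>"
proof -
  have "norm (integral \<Omega> f) \<le> integral \<Omega> (\<lambda>_. e)"
    by (rule integral_norm_bound_integral[OF fi integrable_on_const[OF lm]]) (use le in auto)
  also have "integral \<Omega> (\<lambda>_. e) = e * measure lebesgue \<Omega>"
    using lmeasure_integral[OF lm] integral_mult_right[of \<Omega> e "\<lambda>_. 1::real"] by simp
  finally show ?thesis by simp
qed

lemma grad_eq:
  assumes "(f has_derivative (\<lambda>h. g \<bullet> h)) (at x)"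
  shows "grad f x = g"
proof -
  have "frechet_derivative f (at x) = (\<lambda>h. g \<bullet> h)" using frechet_derivative_at[OF assms] by simp
  thus ?thesis by (simp add: grad_def inner_axis vec_eq_iff)
qed

lemma diverg_eq:
  fixes F :: "real^'n \<Rightarrow> real^'n"
  assumes "(F has_derivative DF) (at x)"
  shows "diverg F x = (\<Sum>i\<in>UNIV. DF (axis i 1) $ i)"
proof -
  have "frechet_derivative (\<lambda>y. F y $ i) (at x) = (\<lambda>h. DF h $ i)" for i
    using frechet_derivative_at[OF vec_nth_has_derivative[OF assms, of i]] by simp
  thus ?thesis by (simp add: diverg_def)
qed

lemma deriv_int:
  fixes u ut :: "real^'n \<Rightarrow> real \<Rightarrow> real"
  assumes b: "bounded \<Omega>" and o: "open \<Omega>"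
    and der: "\<And>x s. x \<in> closure \<Omega> \<Longrightarrow> a < s \<Longrightarrow> s < b' \<Longrightarrow> ((\<lambda>s. u x s) has_real_derivative ut x s) (at s)"
    and cont: "continuous_on (closure \<Omega> \<times> {a<..<b'}) (\<lambda>(x,s). ut x s)"
    and ucont: "\<And>s. a < s \<Longrightarrow> s < b' \<Longrightarrow> continuous_on (closure \<Omega>) (\<lambda>x. u x s)"
    and t: "a < t" "t < b'"
  shows "((\<lambda>s. integral \<Omega> (\<lambda>x. u x s)) has_real_derivative integral \<Omega> (\<lambda>x. ut x t)) (at t)"
proof -
  let ?K = "closure \<Omega>"
  have lm: "\<Omega> \<in> lmeasurable" by (rule lmeasurable_open[OF b o])
  define \<delta>0 where "\<delta>0 = min (t - a) (b' - t) / 2"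
  have \<delta>0: "\<delta>0 > 0" using t by (simp add: \<delta>0_def)
  define J where "J = {t - \<delta>0 .. t + \<delta>0}"
  have "\<delta>0 < t - a" "\<delta>0 < b' - t" using t by (auto simp: \<delta>0_def)
  hence J: "J \<subseteq> {a<..<b'}" by (auto simp: J_def)
  have Kc: "compact ?K" using b by (simp add: compact_closure)
  have uc: "uniformly_continuous_on (?K \<times> J) (\<lambda>(x,s). ut x s)"
    by (rule compact_uniformly_continuous[OF continuous_on_subset[OF cont]])
       (use J Kc in \<open>auto simp: J_def intro: compact_Times\<close>)
  have utcont: "continuous_on ?K (\<lambda>x. ut x s)" if "a < s" "s < b'" for s
  proof -
    have "continuous_on ?K (\<lambda>x. (\<lambda>(x,s). ut x s) (x, s))"
      by (rule continuous_on_compose2[OF cont]) (use that in \<open>auto intro!: continuous_intros\<close>)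
    thus ?thesis by simp
  qed
  have uint: "(\<lambda>x. u x s) integrable_on \<Omega>" if "a < s" "s < b'" for s
    by (rule int_cont[OF b o ucont[OF that]])
  have utint: "(\<lambda>x. ut x t) integrable_on \<Omega>" by (rule int_cont[OF b o utcont[OF t]])
  show ?thesis
    unfolding has_field_derivative_iff LIM_eq
  proof (intro allI impI)
    fix r :: real assume r: "r > 0"
    define \<epsilon> where "\<epsilon> = r / (2 * (measure lebesgue \<Omega> + 1))"
    have mpos: "measure lebesgue \<Omega> + 1 > 0" using measure_nonneg[of lebesgue \<Omega>] by linarith
    have \<epsilon>: "\<epsilon> > 0" using r mpos by (simp add: \<epsilon>_def)
    obtain d where d: "d > 0" and dd: "\<And>p p'. p \<in> ?K \<times> J \<Longrightarrow> p' \<in> ?K \<times> J \<Longrightarrow> dist p' p < d \<Longrightarrow>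
         dist ((\<lambda>(x,s). ut x s) p') ((\<lambda>(x,s). ut x s) p) < \<epsilon>"
      using uc \<epsilon> unfolding uniformly_continuous_on_def by metis
    define \<sigma> where "\<sigma> = min d \<delta>0"
    show "\<exists>\<sigma>>0. \<forall>s. s \<noteq> t \<and> norm (s - t) < \<sigma> \<longrightarrow>
            norm ((integral \<Omega> (\<lambda>x. u x s) - integral \<Omega> (\<lambda>x. u x t)) / (s - t) - integral \<Omega> (\<lambda>x. ut x t)) < r"
    proof (intro exI[of _ \<sigma>] conjI allI impI)
      show "\<sigma> > 0" using d \<delta>0 by (simp add: \<sigma>_def)
      fix s assume s: "s \<noteq> t \<and> norm (s - t) < \<sigma>"
      have sJ: "s \<in> J" using s by (auto simp: J_def \<sigma>_def dist_real_def)
      have tJ: "t \<in> J" using \<delta>0 by (auto simp: J_def)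
      have sab: "a < s" "s < b'" using sJ J by auto
      have pw: "\<bar>(u x s - u x t) / (s - t) - ut x t\<bar> \<le> \<epsilon>" if x: "x \<in> ?K" for x
      proof -
        define \<phi> where "\<phi> \<tau> = u x \<tau> - \<tau> * ut x t" for \<tau>
        have segJ: "closed_segment t s \<subseteq> J" using sJ tJ
          by (metis J_def convex_contains_segment convex_real_interval(5))
        have "norm (\<phi> s - \<phi> t) \<le> \<epsilon> * norm (s - t)"
        proof (rule differentiable_bound[OF convex_closed_segment])
          show "(\<phi> has_derivative (\<lambda>h. h * (ut x \<tau> - ut x t))) (at \<tau> within closed_segment t s)"
            if "\<tau> \<in> closed_segment t s" for \<tau>
          proof -
            have "\<tau> \<in> J" using that segJ by blast
            hence "a < \<tau>" "\<tau> < b'" using J by auto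
            hence "((\<lambda>s. u x s) has_real_derivative ut x \<tau>) (at \<tau>)" using der x by blast
            hence "(\<phi> has_real_derivative (ut x \<tau> - ut x t)) (at \<tau>)"
              unfolding \<phi>_def by (auto intro!: derivative_eq_intros)
            hence "(\<phi> has_derivative (\<lambda>h. h * (ut x \<tau> - ut x t))) (at \<tau>)"
              by (simp add: has_field_derivative_def mult.commute[of _ "ut x \<tau> - ut x t"])
            thus ?thesis by (rule has_derivative_at_withinI)
          qed
          show "onorm (\<lambda>h. h * (ut x \<tau> - ut x t)) \<le> \<epsilon>" if "\<tau> \<in> closed_segment t s" for \<tau>
          proof (rule onorm_le)
            have \<tau>J: "\<tau> \<in> J" using that segJ by blast
            have "dist \<tau> t \<le> dist s t" using that by (simp add: dist_real_def closed_segment_eq_real_ivl split: if_splits)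
            hence "dist (x, \<tau>) (x, t) < d" using s by (simp add: dist_Pair_Pair \<sigma>_def dist_real_def)
            hence "dist (ut x \<tau>) (ut x t) < \<epsilon>" using dd[of "(x,t)" "(x,\<tau>)"] x \<tau>J tJ by auto
            hence "\<bar>ut x \<tau> - ut x t\<bar> \<le> \<epsilon>" by (simp add: dist_real_def)
            thus "norm (h * (ut x \<tau> - ut x t)) \<le> \<epsilon> * norm h" for h
              by (simp add: abs_mult mult.commute[of "\<bar>h\<bar>"] mult_right_mono)
          qed
        qed auto
        hence "\<bar>u x s - u x t - (s - t) * ut x t\<bar> \<le> \<epsilon> * \<bar>s - t\<bar>" by (simp add: \<phi>_def algebra_simps)
        moreover have "(u x s - u x t) / (s - t) - ut x t = (u x s - u x t - (s - t) * ut x t) / (s - t)"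
          using s by (simp add: field_simps)
        ultimately show ?thesis using s by (simp add: abs_divide pos_divide_le_eq)
      qed
      have "((\<lambda>x. (u x s - u x t) / (s - t) - ut x t) has_integral
             ((integral \<Omega> (\<lambda>x. u x s) - integral \<Omega> (\<lambda>x. u x t)) / (s - t) - integral \<Omega> (\<lambda>x. ut x t))) \<Omega>"
        by (intro has_integral_diff has_integral_divide integrable_integral uint sab utint t)
      hence eq: "integral \<Omega> (\<lambda>x. (u x s - u x t) / (s - t) - ut x t) =
             (integral \<Omega> (\<lambda>x. u x s) - integral \<Omega> (\<lambda>x. u x t)) / (s - t) - integral \<Omega> (\<lambda>x. ut x t)"
        and int: "(\<lambda>x. (u x s - u x t) / (s - t) - ut x t) integrable_on \<Omega>"
        by (auto simp: integral_unique has_integral_integrable)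
      have "\<bar>integral \<Omega> (\<lambda>x. (u x s - u x t) / (s - t) - ut x t)\<bar> \<le> \<epsilon> * measure lebesgue \<Omega>"
        by (rule int_const_bound[OF lm int]) (use pw closure_subset in blast)
      also have "\<dots> < r"
      proof -
        have "\<epsilon> * measure lebesgue \<Omega> \<le> \<epsilon> * (measure lebesgue \<Omega> + 1)" using \<epsilon> by simp
        also have "\<dots> = r / 2" unfolding \<epsilon>_def by (rule half_cancel[OF mpos])
        finally show ?thesis using r by simp
      qed
      finally show "norm ((integral \<Omega> (\<lambda>x. u x s) - integral \<Omega> (\<lambda>x. u x t)) / (s - t) - integral \<Omega> (\<lambda>x. ut x t)) < r"
        using eq by simp
    qed
  qed
qed

lemma cont_int:
  fixes u :: "real^'n \<Rightarrow> real \<Rightarrow> real"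
  assumes b: "bounded \<Omega>" and o: "open \<Omega>" and J: "compact J"
    and cont: "continuous_on (closure \<Omega> \<times> J) (\<lambda>(x,s). u x s)"
  shows "continuous_on J (\<lambda>s. integral \<Omega> (\<lambda>x. u x s))"
proof -
  let ?K = "closure \<Omega>"
  have lm: "\<Omega> \<in> lmeasurable" by (rule lmeasurable_open[OF b o])
  have Kc: "compact ?K" using b by (simp add: compact_closure)
  have uc: "uniformly_continuous_on (?K \<times> J) (\<lambda>(x,s). u x s)"
    by (rule compact_uniformly_continuous[OF cont compact_Times[OF Kc J]])
  have ucont: "continuous_on ?K (\<lambda>x. u x s)" if "s \<in> J" for s
  proof -
    have "continuous_on ?K (\<lambda>x. (\<lambda>(x,s). u x s) (x, s))"
      by (rule continuous_on_compose2[OF cont]) (use that in \<open>auto intro!: continuous_intros\<close>)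
    thus ?thesis by simp
  qed
  show ?thesis unfolding continuous_on_iff
  proof (intro ballI allI impI)
    fix s r assume sJ: "s \<in> J" and r: "(r::real) > 0"
    define \<epsilon> where "\<epsilon> = r / (2 * (measure lebesgue \<Omega> + 1))"
    have mpos: "measure lebesgue \<Omega> + 1 > 0" using measure_nonneg[of lebesgue \<Omega>] by linarith
    have \<epsilon>: "\<epsilon> > 0" using r mpos by (simp add: \<epsilon>_def)
    obtain d where d: "d > 0" and dd: "\<And>p p'. p \<in> ?K \<times> J \<Longrightarrow> p' \<in> ?K \<times> J \<Longrightarrow> dist p' p < d \<Longrightarrow>
         dist ((\<lambda>(x,s). u x s) p') ((\<lambda>(x,s). u x s) p) < \<epsilon>"
      using uc \<epsilon> unfolding uniformly_continuous_on_def by metis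
    show "\<exists>\<delta>>0. \<forall>s'\<in>J. dist s' s < \<delta> \<longrightarrow> dist (integral \<Omega> (\<lambda>x. u x s')) (integral \<Omega> (\<lambda>x. u x s)) < r"
    proof (intro exI[of _ d] conjI ballI impI)
      show "d > 0" by fact
      fix s' assume s'J: "s' \<in> J" and ds: "dist s' s < d"
      have int: "(\<lambda>x. u x s' - u x s) integrable_on \<Omega>"
        by (intro integrable_diff int_cont[OF b o] ucont s'J sJ)
      have pw: "\<bar>u x s' - u x s\<bar> \<le> \<epsilon>" if "x \<in> \<Omega>" for x
      proof -
        have "x \<in> ?K" using that closure_subset by blast
        hence "dist (u x s') (u x s) < \<epsilon>" using dd[of "(x,s)" "(x,s')"] sJ s'J ds by (simp add: dist_Pair_Pair)
        thus ?thesis by (simp add: dist_real_def)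
      qed
      have "\<bar>integral \<Omega> (\<lambda>x. u x s' - u x s)\<bar> \<le> \<epsilon> * measure lebesgue \<Omega>"
        by (rule int_const_bound[OF lm int pw])
      also have "\<dots> < r"
      proof -
        have "\<epsilon> * measure lebesgue \<Omega> \<le> \<epsilon> * (measure lebesgue \<Omega> + 1)" using \<epsilon> by simp
        also have "\<dots> = r / 2" unfolding \<epsilon>_def by (rule half_cancel[OF mpos])
        finally show ?thesis using r by simp
      qed
      moreover have "integral \<Omega> (\<lambda>x. u x s' - u x s) = integral \<Omega> (\<lambda>x. u x s') - integral \<Omega> (\<lambda>x. u x s)"
        by (intro integral_diff int_cont[OF b o] ucont s'J sJ)
      ultimately show "dist (integral \<Omega> (\<lambda>x. u x s')) (integral \<Omega> (\<lambda>x. u x s)) < r"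
        by (simp add: dist_real_def)
    qed
  qed
qed

lemma slice_cont:
  assumes "continuous_on (A \<times> B) (\<lambda>(x,s). f x s)" "s \<in> B"
  shows "continuous_on A (\<lambda>x. f x s)"
proof -
  have "continuous_on A (\<lambda>x. (\<lambda>(x,s). f x s) (x, s))"
    by (rule continuous_on_compose2[OF assms(1)]) (use assms(2) in \<open>auto intro!: continuous_intros\<close>)
  thus ?thesis by simp
qed

lemma cont_mv:
  fixes M :: "'a::topological_space \<Rightarrow> real^'n^'m"
  assumes "continuous_on S M"
  shows "continuous_on S (\<lambda>x. M x *v c)"
  unfolding matrix_vector_mult_def
  by (intro continuous_intros continuous_on_component assms)

definition phi :: "real \<Rightarrow> real \<Rightarrow> real" where
  "phi \<alpha> s = s / (1 + s) powr \<alpha>"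

definition dphi :: "real \<Rightarrow> real \<Rightarrow> real" where
  "dphi \<alpha> s = (1 * (1 + s) powr \<alpha> - s * ((1 + s) powr \<alpha> * (0 * ln (1 + s) + 1 * \<alpha> / (1 + s))))
               / ((1 + s) powr \<alpha> * (1 + s) powr \<alpha>)"

lemma phi_deriv:
  assumes "s > -1"
  shows "(phi \<alpha> has_real_derivative dphi \<alpha> s) (at s)"
proof -
  have p: "1 + s > 0" using assms by simp
  have a: "((\<lambda>s. 1 + s) has_real_derivative 1) (at s)" by (auto intro!: derivative_eq_intros)
  have b: "((\<lambda>s. (1 + s) powr \<alpha>) has_real_derivative ((1 + s) powr \<alpha> * (0 * ln (1 + s) + 1 * \<alpha> / (1 + s)))) (at s)"
    using DERIV_powr[OF a p, of "\<lambda>_. \<alpha>" 0] by simp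
  have "((\<lambda>s. s / (1 + s) powr \<alpha>) has_real_derivative dphi \<alpha> s) (at s)"
    unfolding dphi_def by (rule DERIV_divide[OF DERIV_ident b]) (use p in simp)
  thus ?thesis by (simp add: phi_def[abs_def])
qed

lemma dphi_cont: "continuous_on {0..} (dphi \<alpha>)"
  unfolding dphi_def
  by (intro continuous_intros) (auto simp: add_pos_nonneg)

context
  fixes \<Omega> :: "(real^'n) set" and \<rho> :: "real^'n \<Rightarrow> real"
  assumes dom: "bounded_smooth_domain \<Omega>" and rdef: "defining_fun \<Omega> \<rho>"
begin

lemma neumann_grad:
  assumes y: "y \<in> frontier \<Omega>"
    and fd: "(f has_derivative (\<lambda>h. g \<bullet> h)) (at y within closure \<Omega>)"
    and nz: "neumann_zero_at \<Omega> f y"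
  shows "g \<bullet> grad \<rho> y = 0"
proof -
  obtain D where D: "(f has_derivative D) (at y within closure \<Omega>)" "D (outward_normal \<Omega> y) = 0"
    using nz by (auto simp: neumann_zero_at_def)
  let ?N = "grad \<rho> y"
  have y0: "\<rho> y = 0" using y frontier_eq[OF dom rdef] by auto
  have N0: "?N \<noteq> 0" using N_nz[OF dom rdef y0] .
  have nu: "outward_normal \<Omega> y = (1 / norm ?N) *\<^sub>R ?N" by (rule normal_eq[OF dom rdef y])
  have lin: "linear D" using D(1) has_derivative_linear by blast
  have "D ?N = norm ?N * D (outward_normal \<Omega> y)"
    using N0 lin by (simp add: nu linear_scale)
  hence DN: "D ?N = 0" using D(2) by simp
  have "?N \<bullet> (- ?N) < 0" using N0 by simp
  then obtain d where d: "d > 0" "\<And>s. 0 < s \<Longrightarrow> s < d \<Longrightarrow> \<rho> (y + s *\<^sub>R (- ?N)) < \<rho> y"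
    using dir_dec[OF rho_deriv[OF dom rdef]] by metis
  have seg: "y + s *\<^sub>R (- ?N) \<in> closure \<Omega>" if "0 \<le> s" "s \<le> d/2" for s
  proof (cases "s = 0")
    case True thus ?thesis using y by (simp add: frontier_def)
  next
    case False
    hence "\<rho> (y + s *\<^sub>R (- ?N)) < 0" using d that y0 by auto
    thus ?thesis using closure_eq[OF dom rdef] by simp
  qed
  have "D (- ?N) = g \<bullet> (- ?N)"
    by (rule deriv_unique_dir[OF D(1) fd, of "d/2"]) (use d seg in auto)
  moreover have "D (- ?N) = - D ?N" using lin by (simp add: linear_neg)
  ultimately show ?thesis using DN by simp
qed

end

theorem lemma2p2:
  fixes \<Omega> :: "(real^'n) set"
    and \<alpha> \<kappa> :: real
    and T :: ereal
    and u v w :: "real^'n \<Rightarrow> real \<Rightarrow> real"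
  assumes dom: "bounded_smooth_domain \<Omega>"
    and alpha: "\<alpha> \<ge> 0" and kappa: "\<kappa> \<ge> 0" and T: "T > 0"
    and u_nonneg: "\<forall>x\<in>closure \<Omega>. \<forall>t\<in>time_closed0 T. u x t \<ge> 0"
    and v_nonneg: "\<forall>x\<in>closure \<Omega>. \<forall>t\<in>time_closed0 T. v x t \<ge> 0"
    and u_reg: "C0_space \<Omega> T u" "C21_space \<Omega> T u"
    and v_reg: "C0_space \<Omega> T v" "C21_space \<Omega> T v"
    and u_eq: "\<forall>x\<in>\<Omega>. \<forall>t\<in>time_open T.
       deriv (\<lambda>s. u x s) t =
         lapl (\<lambda>y. u y t) x
         - diverg (\<lambda>y. (u y t / (1 + u y t) powr \<alpha>) *\<^sub>R grad (\<lambda>z. v z t) y) x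
         - u x t * w x t + \<kappa> - u x t"
    and v_eq: "\<forall>x\<in>\<Omega>. \<forall>t\<in>time_open T.
       deriv (\<lambda>s. v x s) t = lapl (\<lambda>y. v y t) x + u x t * w x t - v x t"
    and bc: "\<forall>x\<in>frontier \<Omega>. \<forall>t\<in>time_open T.
       neumann_zero_at \<Omega> (\<lambda>y. u y t) x \<and> neumann_zero_at \<Omega> (\<lambda>y. v y t) x \<and>
       neumann_zero_at \<Omega> (\<lambda>y. w y t) x"
  shows "\<forall>t\<in>time_open T.
     integral \<Omega> (\<lambda>x. u x t) + integral \<Omega> (\<lambda>x. v x t) =
       exp (- t) * (integral \<Omega> (\<lambda>x. u x 0) + integral \<Omega> (\<lambda>x. v x 0))
       + \<kappa> * measure lebesgue \<Omega> * (1 - exp (- t))"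
proof -
  obtain \<rho> where rdef: "defining_fun \<Omega> \<rho>" using dom by (auto simp: bounded_smooth_domain_def)
  have Ob: "bounded \<Omega>" and Oo: "open \<Omega>" using dom by (auto simp: bounded_smooth_domain_def)
  have lm: "\<Omega> \<in> lmeasurable" by (rule lmeasurable_open[OF Ob Oo])
  let ?K = "closure \<Omega>"
  obtain ut gu hu where uD: "\<forall>x\<in>?K. \<forall>t\<in>time_open T.
          ((\<lambda>s. u x s) has_real_derivative ut x t) (at t) \<and>
          ((\<lambda>y. u y t) has_derivative (\<lambda>h. gu x t \<bullet> h)) (at x within ?K) \<and>
          ((\<lambda>y. gu y t) has_derivative (\<lambda>h. hu x t *v h)) (at x within ?K)"
    and utc: "continuous_on (?K \<times> time_open T) (\<lambda>(x,t). ut x t)"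
    and guc: "continuous_on (?K \<times> time_open T) (\<lambda>(x,t). gu x t)"
    and huc: "continuous_on (?K \<times> time_open T) (\<lambda>(x,t). hu x t)"
    using u_reg(2) unfolding C21_space_def by blast
  obtain vt gv hv where vD: "\<forall>x\<in>?K. \<forall>t\<in>time_open T.
          ((\<lambda>s. v x s) has_real_derivative vt x t) (at t) \<and>
          ((\<lambda>y. v y t) has_derivative (\<lambda>h. gv x t \<bullet> h)) (at x within ?K) \<and>
          ((\<lambda>y. gv y t) has_derivative (\<lambda>h. hv x t *v h)) (at x within ?K)"
    and vtc: "continuous_on (?K \<times> time_open T) (\<lambda>(x,t). vt x t)"
    and gvc: "continuous_on (?K \<times> time_open T) (\<lambda>(x,t). gv x t)"
    and hvc: "continuous_on (?K \<times> time_open T) (\<lambda>(x,t). hv x t)"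
    using v_reg(2) unfolding C21_space_def by blast
  have uC0: "continuous_on (?K \<times> time_closed0 T) (\<lambda>(x,t). u x t)" using u_reg(1) by (simp add: C0_space_def)
  have vC0: "continuous_on (?K \<times> time_closed0 T) (\<lambda>(x,t). v x t)" using v_reg(1) by (simp add: C0_space_def)
  have oc: "time_open T \<subseteq> time_closed0 T" by (auto simp: time_open_def time_closed0_def)
  define m where "m = measure lebesgue \<Omega>"
  define Y where "Y t = integral \<Omega> (\<lambda>x. u x t) + integral \<Omega> (\<lambda>x. v x t)" for t
  have kI: "((\<lambda>_. \<kappa>) has_integral \<kappa> * m) \<Omega>"
  proof -
    have "integral \<Omega> (\<lambda>_. \<kappa>) = \<kappa> * m"
      using lmeasure_integral[OF lm] integral_mult_right[of \<Omega> \<kappa> "\<lambda>_. 1::real"] by (simp add: m_def)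
    thus ?thesis using integrable_integral[OF integrable_on_const[OF lm, of \<kappa>]] by simp
  qed
  have Yder: "(Y has_real_derivative (\<kappa> * m - Y t)) (at t)" if t: "t \<in> time_open T" for t
  proof -
    have "ereal t < T" using t by (simp add: time_open_def)
    from ereal_dense2[OF this] obtain b' where "ereal t < ereal b'" "ereal b' < T" by blast
    hence b': "t < b'" "ereal b' < T" by auto
    have t0: "0 < t" using t by (simp add: time_open_def)
    have sub: "s \<in> time_open T" if "0 < s" "s < b'" for s
      using that b' by (auto simp: time_open_def intro: order.strict_trans[of _ "ereal b'"])
    have sub2: "?K \<times> {0<..<b'} \<subseteq> ?K \<times> time_open T" using sub by auto
    have dIu: "((\<lambda>s. integral \<Omega> (\<lambda>x. u x s)) has_real_derivative integral \<Omega> (\<lambda>x. ut x t)) (at t)"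
    proof (rule deriv_int[OF Ob Oo _ _ _ t0 b'(1)])
      show "((\<lambda>s. u x s) has_real_derivative ut x s) (at s)" if "x \<in> ?K" "0 < s" "s < b'" for x s
        using uD sub[OF that(2,3)] that(1) by blast
      show "continuous_on (?K \<times> {0<..<b'}) (\<lambda>(x, s). ut x s)" by (rule continuous_on_subset[OF utc sub2])
      show "continuous_on ?K (\<lambda>x. u x s)" if "0 < s" "s < b'" for s
        by (rule slice_cont[OF uC0]) (use sub[OF that] oc in blast)
    qed
    have dIv: "((\<lambda>s. integral \<Omega> (\<lambda>x. v x s)) has_real_derivative integral \<Omega> (\<lambda>x. vt x t)) (at t)"
    proof (rule deriv_int[OF Ob Oo _ _ _ t0 b'(1)])
      show "((\<lambda>s. v x s) has_real_derivative vt x s) (at s)" if "x \<in> ?K" "0 < s" "s < b'" for x s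
        using vD sub[OF that(2,3)] that(1) by blast
      show "continuous_on (?K \<times> {0<..<b'}) (\<lambda>(x, s). vt x s)" by (rule continuous_on_subset[OF vtc sub2])
      show "continuous_on ?K (\<lambda>x. v x s)" if "0 < s" "s < b'" for s
        by (rule slice_cont[OF vC0]) (use sub[OF that] oc in blast)
    qed
    have DY: "(Y has_real_derivative (integral \<Omega> (\<lambda>x. ut x t) + integral \<Omega> (\<lambda>x. vt x t))) (at t)"
      unfolding Y_def[abs_def] by (rule DERIV_add[OF dIu dIv])
    have tc: "t \<in> time_closed0 T" using t oc by blast
    have du: "((\<lambda>y. u y t) has_derivative (\<lambda>h. gu x t \<bullet> h)) (at x within ?K)" if "x \<in> ?K" for x
      using uD that t by blast
    have dgu: "((\<lambda>y. gu y t) has_derivative (\<lambda>h. hu x t *v h)) (at x within ?K)" if "x \<in> ?K" for x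
      using uD that t by blast
    have dv: "((\<lambda>y. v y t) has_derivative (\<lambda>h. gv x t \<bullet> h)) (at x within ?K)" if "x \<in> ?K" for x
      using vD that t by blast
    have dgv: "((\<lambda>y. gv y t) has_derivative (\<lambda>h. hv x t *v h)) (at x within ?K)" if "x \<in> ?K" for x
      using vD that t by blast
    have unn: "u x t \<ge> 0" if "x \<in> ?K" for x using u_nonneg that tc by blast
    define H where "H y = gu y t + gv y t - phi \<alpha> (u y t) *\<^sub>R gv y t" for y
    define DH where "DH x h = hu x t *v h + hv x t *v h -
        (phi \<alpha> (u x t) *\<^sub>R (hv x t *v h) + (dphi \<alpha> (u x t) * (gu x t \<bullet> h)) *\<^sub>R gv x t)" for x h
    have dphiu: "((\<lambda>y. phi \<alpha> (u y t)) has_derivative (\<lambda>h. dphi \<alpha> (u x t) * (gu x t \<bullet> h))) (at x within ?K)"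
      if x: "x \<in> ?K" for x
    proof -
      have "(phi \<alpha> has_derivative (*) (dphi \<alpha> (u x t))) (at (u x t))"
        using phi_deriv[of "u x t" \<alpha>] unn[OF x] by (simp add: has_field_derivative_def)
      from has_derivative_compose[OF du[OF x] this] show ?thesis .
    qed
    have dP: "((\<lambda>y. phi \<alpha> (u y t) *\<^sub>R gv y t) has_derivative
        (\<lambda>h. phi \<alpha> (u x t) *\<^sub>R (hv x t *v h) + (dphi \<alpha> (u x t) * (gu x t \<bullet> h)) *\<^sub>R gv x t)) (at x within ?K)"
      if x: "x \<in> ?K" for x
      using has_derivative_scaleR[OF dphiu[OF x] dgv[OF x]] .
    have Hder: "(H has_derivative DH x) (at x within ?K)" if x: "x \<in> ?K" for x
      unfolding H_def[abs_def] DH_def[abs_def]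
      by (intro has_derivative_diff has_derivative_add dgu dgv dP x)
    have ucK: "continuous_on ?K (\<lambda>x. u x t)" by (rule slice_cont[OF uC0 tc])
    have gucK: "continuous_on ?K (\<lambda>x. gu x t)" by (rule slice_cont[OF guc t])
    have gvcK: "continuous_on ?K (\<lambda>x. gv x t)" by (rule slice_cont[OF gvc t])
    have hucK: "continuous_on ?K (\<lambda>x. hu x t)" by (rule slice_cont[OF huc t])
    have hvcK: "continuous_on ?K (\<lambda>x. hv x t)" by (rule slice_cont[OF hvc t])
    have phicK: "continuous_on ?K (\<lambda>x. phi \<alpha> (u x t))"
      unfolding phi_def using unn
      by (intro continuous_intros ucK) (auto dest!: unn)
    have dphicK: "continuous_on ?K (\<lambda>x. dphi \<alpha> (u x t))"
      by (rule continuous_on_compose2[OF dphi_cont ucK]) (use unn in auto)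
    have DHcont: "continuous_on ?K (\<lambda>x. DH x (axis j 1))" for j
      unfolding DH_def
      by (intro continuous_intros cont_mv hucK hvcK gucK gvcK phicK dphicK)
    have Hbd: "H y \<bullet> grad \<rho> y = 0" if y: "y \<in> frontier \<Omega>" for y
    proof -
      have yK: "y \<in> ?K" using y by (simp add: frontier_def)
      have "gu y t \<bullet> grad \<rho> y = 0"
        by (rule neumann_grad[OF dom rdef y du[OF yK]]) (use bc y t in blast)
      moreover have "gv y t \<bullet> grad \<rho> y = 0"
        by (rule neumann_grad[OF dom rdef y dv[OF yK]]) (use bc y t in blast)
      ultimately show ?thesis by (simp add: H_def inner_diff_left inner_add_left)
    qed
    have divI: "((\<lambda>x. \<Sum>i\<in>UNIV. DH x (axis i 1) $ i) has_integral 0) \<Omega>"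
      by (rule div_zero[OF dom rdef Hder DHcont Hbd])
    have pw: "ut x t + vt x t = (\<Sum>i\<in>UNIV. DH x (axis i 1) $ i) + \<kappa> - u x t - v x t" if xO: "x \<in> \<Omega>" for x
    proof -
      have xK: "x \<in> ?K" using xO closure_subset by blast
      have atx: "at y within ?K = at y" if "y \<in> \<Omega>" for y by (rule at_interior_cl[OF dom rdef that])
      have gradu: "grad (\<lambda>y. u y t) y = gu y t" if "y \<in> \<Omega>" for y
        using grad_eq[of "\<lambda>y. u y t" "gu y t" y] du[of y] atx[OF that] that closure_subset by auto
      have gradv: "grad (\<lambda>y. v y t) y = gv y t" if "y \<in> \<Omega>" for y
        using grad_eq[of "\<lambda>y. v y t" "gv y t" y] dv[of y] atx[OF that] that closure_subset by auto
      have "(grad (\<lambda>y. u y t) has_derivative (\<lambda>h. hu x t *v h)) (at x)"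
        by (rule has_derivative_transform_within_open[OF _ Oo xO, of "\<lambda>y. gu y t"])
           (use dgu[OF xK] atx[OF xO] gradu in auto)
      hence lu: "lapl (\<lambda>y. u y t) x = (\<Sum>i\<in>UNIV. (hu x t *v axis i 1) $ i)"
        unfolding lapl_def by (rule diverg_eq)
      have "(grad (\<lambda>y. v y t) has_derivative (\<lambda>h. hv x t *v h)) (at x)"
        by (rule has_derivative_transform_within_open[OF _ Oo xO, of "\<lambda>y. gv y t"])
           (use dgv[OF xK] atx[OF xO] gradv in auto)
      hence lv: "lapl (\<lambda>y. v y t) x = (\<Sum>i\<in>UNIV. (hv x t *v axis i 1) $ i)"
        unfolding lapl_def by (rule diverg_eq)
      have "((\<lambda>y. (u y t / (1 + u y t) powr \<alpha>) *\<^sub>R grad (\<lambda>z. v z t) y) has_derivative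
        (\<lambda>h. phi \<alpha> (u x t) *\<^sub>R (hv x t *v h) + (dphi \<alpha> (u x t) * (gu x t \<bullet> h)) *\<^sub>R gv x t)) (at x)"
        by (rule has_derivative_transform_within_open[OF _ Oo xO, of "\<lambda>y. phi \<alpha> (u y t) *\<^sub>R gv y t"])
           (use dP[OF xK] atx[OF xO] gradv in \<open>auto simp: phi_def\<close>)
      hence lp: "diverg (\<lambda>y. (u y t / (1 + u y t) powr \<alpha>) *\<^sub>R grad (\<lambda>z. v z t) y) x =
          (\<Sum>i\<in>UNIV. (phi \<alpha> (u x t) *\<^sub>R (hv x t *v axis i 1) + (dphi \<alpha> (u x t) * (gu x t \<bullet> axis i 1)) *\<^sub>R gv x t) $ i)"
        by (rule diverg_eq)
      have e1: "deriv (\<lambda>s. u x s) t = ut x t" using uD xK t by (blast intro: DERIV_imp_deriv)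
      have e2: "deriv (\<lambda>s. v x s) t = vt x t" using vD xK t by (blast intro: DERIV_imp_deriv)
      have "(\<Sum>i\<in>UNIV. DH x (axis i 1) $ i) = lapl (\<lambda>y. u y t) x + lapl (\<lambda>y. v y t) x
            - diverg (\<lambda>y. (u y t / (1 + u y t) powr \<alpha>) *\<^sub>R grad (\<lambda>z. v z t) y) x"
        unfolding lu lv lp DH_def by (simp add: sum.distrib sum_subtractf)
      thus ?thesis using u_eq xO t e1 e2 v_eq by auto
    qed
    have uI: "((\<lambda>x. u x t) has_integral integral \<Omega> (\<lambda>x. u x t)) \<Omega>"
      by (rule integrable_integral[OF int_cont[OF Ob Oo ucK]])
    have vI: "((\<lambda>x. v x t) has_integral integral \<Omega> (\<lambda>x. v x t)) \<Omega>"
      by (rule integrable_integral[OF int_cont[OF Ob Oo slice_cont[OF vC0 tc]]])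
    have Aint: "((\<lambda>x. (\<Sum>i\<in>UNIV. DH x (axis i 1) $ i) + \<kappa> - u x t - v x t) has_integral (0 + \<kappa> * m - integral \<Omega> (\<lambda>x. u x t) - integral \<Omega> (\<lambda>x. v x t))) \<Omega>"
      by (intro has_integral_diff has_integral_add divI kI uI vI)
    have Aeq: "0 + \<kappa> * m - integral \<Omega> (\<lambda>x. u x t) - integral \<Omega> (\<lambda>x. v x t) = \<kappa> * m - Y t"
      by (simp add: Y_def)
    have A0: "((\<lambda>x. (\<Sum>i\<in>UNIV. DH x (axis i 1) $ i) + \<kappa> - u x t - v x t) has_integral (\<kappa> * m - Y t)) \<Omega>"
      using Aint unfolding Aeq .
    have A: "((\<lambda>x. ut x t + vt x t) has_integral (\<kappa> * m - Y t)) \<Omega>"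
      by (rule has_integral_eq[OF _ A0]) (use pw in simp)
    have utK: "continuous_on ?K (\<lambda>x. ut x t)" by (rule slice_cont[OF utc t])
    have vtK: "continuous_on ?K (\<lambda>x. vt x t)" by (rule slice_cont[OF vtc t])
    have B: "((\<lambda>x. ut x t + vt x t) has_integral (integral \<Omega> (\<lambda>x. ut x t) + integral \<Omega> (\<lambda>x. vt x t))) \<Omega>"
      by (intro has_integral_add integrable_integral int_cont[OF Ob Oo] utK vtK)
    have "integral \<Omega> (\<lambda>x. ut x t) + integral \<Omega> (\<lambda>x. vt x t) = \<kappa> * m - Y t"
      using has_integral_unique[OF B A] .
    thus ?thesis using DY by simp
  qed
  show ?thesis
  proof
    fix t0 assume t0: "t0 \<in> time_open T"
    have t0p: "0 < t0" using t0 by (simp add: time_open_def)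
    have J: "{0..t0} \<subseteq> time_closed0 T"
    proof
      fix x assume x: "x \<in> {0..t0}"
      hence "ereal x \<le> ereal t0" by simp
      also have "ereal t0 < T" using t0 by (simp add: time_open_def)
      finally show "x \<in> time_closed0 T" using x by (simp add: time_closed0_def)
    qed
    have Ycont: "continuous_on {0..t0} Y"
    proof -
      have "continuous_on {0..t0} (\<lambda>s. integral \<Omega> (\<lambda>x. u x s))"
        by (rule cont_int[OF Ob Oo compact_Icc continuous_on_subset[OF uC0]]) (use J in auto)
      moreover have "continuous_on {0..t0} (\<lambda>s. integral \<Omega> (\<lambda>x. v x s))"
        by (rule cont_int[OF Ob Oo compact_Icc continuous_on_subset[OF vC0]]) (use J in auto)
      ultimately show ?thesis unfolding Y_def[abs_def] by (intro continuous_intros)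
    qed
    define Z where "Z s = (Y s - \<kappa> * m) * exp s" for s
    have Zcont: "continuous_on {0..t0} Z" unfolding Z_def by (intro continuous_intros Ycont)
    have Zder: "DERIV Z s :> 0" if "0 < s" "s < t0" for s
    proof -
      have "ereal s < ereal t0" using that by simp
      also have "ereal t0 < T" using t0 by (simp add: time_open_def)
      finally have sT: "s \<in> time_open T" using that by (simp add: time_open_def)
      have "DERIV Z s :> ((\<kappa> * m - Y s) * exp s + (Y s - \<kappa> * m) * exp s)"
        unfolding Z_def[abs_def]
        by (rule derivative_eq_intros Yder[OF sT] DERIV_exp refl | simp)+
      thus ?thesis by (simp add: algebra_simps)
    qed
    obtain l z where lz: "0 < z" "z < t0" "DERIV Z z :> l" "Z t0 - Z 0 = (t0 - 0) * l"
      using MVT[OF t0p Zcont] Zder by (meson real_differentiable_def)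
    have "l = 0" using DERIV_unique[OF lz(3) Zder[OF lz(1,2)]] .
    hence "Z t0 = Z 0" using lz(4) by simp
    hence eq: "(Y t0 - \<kappa> * m) * exp t0 = Y 0 - \<kappa> * m" by (simp add: Z_def)
    have "Y t0 - \<kappa> * m = exp (- t0) * (Y 0 - \<kappa> * m)"
    proof -
      have "exp (- t0) * ((Y t0 - \<kappa> * m) * exp t0) = exp (- t0) * (Y 0 - \<kappa> * m)" using eq by simp
      moreover have "exp (- t0) * ((Y t0 - \<kappa> * m) * exp t0) = Y t0 - \<kappa> * m"
        by (simp add: exp_minus field_simps)
      ultimately show ?thesis by simp
    qed
    hence "Y t0 = exp (- t0) * Y 0 + \<kappa> * m * (1 - exp (- t0))" by (simp add: algebra_simps)
    thus "integral \<Omega> (\<lambda>x. u x t0) + integral \<Omega> (\<lambda>x. v x t0) =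
       exp (- t0) * (integral \<Omega> (\<lambda>x. u x 0) + integral \<Omega> (\<lambda>x. v x 0))
       + \<kappa> * measure lebesgue \<Omega> * (1 - exp (- t0))"
      by (simp add: Y_def m_def)
  qed
qed

end
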